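(* Let $M$ and $M'$ be matchings of $X_{2k}$. Then $M$ and $M'$ are disjoint compatible if and only if there is a partition of $M$ into flippable sets whose convex hulls (of their endpoint sets) are pairwise disjoint, such that $M'$ is obtained from $M$ by flipping every set of this partition. Moreover, this partition is uniquely determined by $M$ and $M'$.
   Context: Let $k\ge 1$ and let $X_{2k}=\{P_1,\dots,P_{2k}\}$ be $2k$ points in convex position in the plane, labeled in clockwise cyclic order; indices are taken modulo $2k$. A matching of $X_{2k}$ means a set of $k$ pairwise non-crossing straight segments (edges) with endpoints in $X_{2k}$ covering every point exactly once. Two matchings $M,M'$ of $X_{2k}$ are disjoint compatible if they have no common edge and no edge of $M$ crosses an edge of $M'$. Flippable set: let $M$ be a matching and $N\subseteq M$ with $|N|=m\ge 2$; let $Y$ be the set of the $2m$ endpoints of edges of $N$, labeled $Q_1,\dots,Q_{2m}$ in the cyclic order inherited from $X_{2k}$ (for a suitable choice of $Q_1$). $N$ is a flippable set if $N=\{Q_1Q_2,Q_3Q_4,\dots,Q_{2m-1}Q_{2m}\}$ and the convex hull of $Y$ intersects no edge of $M\setminus N$. Flipping $N$ means replacing $N$ by $\{Q_2Q_3,Q_4Q_5,\dots,Q_{2m-2}Q_{2m-1},Q_{2m}Q_1\}$. *)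

theory Defs
  imports "HOL-Analysis.Analysis"
begin

text \<open>Points are given by an index map P :: nat => real^2; the point set is
  X = {P 0, ..., P (2k-1)}.\<close>

definition orient :: "real^2 \<Rightarrow> real^2 \<Rightarrow> real^2 \<Rightarrow> real" where
  "orient a b c = (b$1 - a$1) * (c$2 - a$2) - (b$2 - a$2) * (c$1 - a$1)"

text \<open>2k points in convex position, labeled in clockwise cyclic order.\<close>
definition convex_clockwise :: "(nat \<Rightarrow> real^2) \<Rightarrow> nat \<Rightarrow> bool" where
  "convex_clockwise P k \<longleftrightarrow>
     (\<forall>i < 2*k. P i \<notin> convex hull (P ` ({0..<2*k} - {i}))) \<and>
     (\<forall>i j l. i < j \<and> j < l \<and> l < 2*k \<longrightarrow> orient (P i) (P j) (P l) < 0)"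

definition seg :: "(nat \<Rightarrow> real^2) \<Rightarrow> nat set \<Rightarrow> (real^2) set" where
  "seg P e = convex hull (P ` e)"

definition crosses :: "(nat \<Rightarrow> real^2) \<Rightarrow> nat set \<Rightarrow> nat set \<Rightarrow> bool" where
  "crosses P e f \<longleftrightarrow> (\<exists>x. x \<in> seg P e \<and> x \<in> seg P f \<and> x \<notin> P ` (e \<inter> f))"

definition is_matching :: "(nat \<Rightarrow> real^2) \<Rightarrow> nat \<Rightarrow> nat set set \<Rightarrow> bool" where
  "is_matching P k M \<longleftrightarrow>
     finite M \<and> card M = k \<and>
     (\<forall>e\<in>M. e \<subseteq> {0..<2*k} \<and> card e = 2) \<and>
     (\<forall>e\<in>M. \<forall>f\<in>M. e \<noteq> f \<longrightarrow> \<not> crosses P e f) \<and>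
     (\<forall>i < 2*k. \<exists>!e. e \<in> M \<and> i \<in> e)"

definition disjoint_compatible ::
  "(nat \<Rightarrow> real^2) \<Rightarrow> nat set set \<Rightarrow> nat set set \<Rightarrow> bool" where
  "disjoint_compatible P M M' \<longleftrightarrow>
     M \<inter> M' = {} \<and> (\<forall>e\<in>M. \<forall>f\<in>M'. \<not> crosses P e f)"

text \<open>Endpoints of N in cyclic (index) order, starting at offset r:
  Q r j is Q_(j+1) in the paper (0-based), indices modulo 2m.\<close>
definition Qlab :: "nat set set \<Rightarrow> nat \<Rightarrow> nat \<Rightarrow> nat" where
  "Qlab N r j = (let ys = sorted_list_of_set (\<Union>N)
                 in ys ! ((j + r) mod length ys))"

text \<open>s = 0: {Q1Q2, Q3Q4, ..., Q(2m-1)Q(2m)};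
      s = 1: {Q2Q3, ..., Q(2m-2)Q(2m-1), Q(2m)Q1}.\<close>
definition pairs :: "nat set set \<Rightarrow> nat \<Rightarrow> nat \<Rightarrow> nat set set" where
  "pairs N r s = {{Qlab N r (2*i + s), Qlab N r (2*i + s + 1)} | i. i < card N}"

definition flippable :: "(nat \<Rightarrow> real^2) \<Rightarrow> nat set set \<Rightarrow> nat set set \<Rightarrow> bool" where
  "flippable P M N \<longleftrightarrow>
     N \<subseteq> M \<and> card N \<ge> 2 \<and>
     (\<exists>r. N = pairs N r 0) \<and>
     (\<forall>e \<in> M - N. convex hull (P ` \<Union>N) \<inter> seg P e = {})"

definition flip :: "nat set set \<Rightarrow> nat set set" where
  "flip N = pairs N (SOME r. N = pairs N r 0) 1"

definition good_partition ::
  "(nat \<Rightarrow> real^2) \<Rightarrow> nat set set \<Rightarrow> nat set set \<Rightarrow> nat set set set \<Rightarrow> bool" where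
  "good_partition P M M' Pt \<longleftrightarrow>
     \<Union>Pt = M \<and> {} \<notin> Pt \<and>
     (\<forall>N1\<in>Pt. \<forall>N2\<in>Pt. N1 \<noteq> N2 \<longrightarrow> N1 \<inter> N2 = {}) \<and>
     (\<forall>N\<in>Pt. flippable P M N) \<and>
     (\<forall>N1\<in>Pt. \<forall>N2\<in>Pt. N1 \<noteq> N2 \<longrightarrow>
         convex hull (P ` \<Union>N1) \<inter> convex hull (P ` \<Union>N2) = {}) \<and>
     M' = (M - \<Union>Pt) \<union> \<Union>(flip ` Pt)"

end

theory Submission
  imports Defs
begin

lemma orient_cyc: "orient a b c = orient b c a"
  unfolding orient_def by (simp add: algebra_simps)

lemma orient_swap23: "orient a c b = - orient a b c"
  unfolding orient_def by (simp add: algebra_simps)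

lemma orient_self1: "orient a b a = 0" and orient_self2: "orient a b b = 0"
  unfolding orient_def by (simp_all add: algebra_simps)

lemma orient_comb:
  "orient a b ((1 - u) *\<^sub>R x + u *\<^sub>R y) = (1 - u) * orient a b x + u * orient a b y"
  unfolding orient_def by (simp add: algebra_simps)

lemma orient_sign:
  assumes cc: "convex_clockwise P k" and ab: "a < b" "b < 2*k" and v: "v < 2*k"
  shows "a < v \<Longrightarrow> v < b \<Longrightarrow> orient (P a) (P b) (P v) > 0"
    and "v < a \<Longrightarrow> orient (P a) (P b) (P v) < 0"
    and "b < v \<Longrightarrow> orient (P a) (P b) (P v) < 0"
proof -
  have O: "\<And>i j l. i < j \<Longrightarrow> j < l \<Longrightarrow> l < 2*k \<Longrightarrow> orient (P i) (P j) (P l) < 0"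
    using cc unfolding convex_clockwise_def by blast
  show "a < v \<Longrightarrow> v < b \<Longrightarrow> orient (P a) (P b) (P v) > 0"
    using O[of a v b] ab orient_swap23[of "P a" "P v" "P b"] by simp
  show "v < a \<Longrightarrow> orient (P a) (P b) (P v) < 0"
    using O[of v a b] ab orient_cyc[of "P v" "P a" "P b"] by simp
  show "b < v \<Longrightarrow> orient (P a) (P b) (P v) < 0"
    using O[of a b v] ab v by simp
qed

lemma seg_pair: "seg P {a, b} = closed_segment (P a) (P b)"
  unfolding seg_def by (simp add: segment_convex_hull)

lemma crosses_sym: "crosses P e f = crosses P f e"
  unfolding crosses_def by (auto simp: Int_commute)

lemma on_seg_orient0:
  assumes "x \<in> closed_segment A B" shows "orient A B x = 0"
proof -
  obtain u where "x = (1 - u) *\<^sub>R A + u *\<^sub>R B" using assms unfolding closed_segment_def by blast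
  then show ?thesis by (simp add: orient_comb orient_self1 orient_self2)
qed

lemma vec2_eqI: fixes x y :: "real^2" assumes "x$1 = y$1" "x$2 = y$2" shows "x = y"
  using assms by (simp add: vec_eq_iff forall_2)

lemma cross_core:
  assumes cc: "convex_clockwise P k" and o: "a < c" "c < b" "b < d" "d < 2*k"
  shows "crosses P {a, b} {c, d}"
proof -
  define A where "A = P a"
  define B where "B = P b"
  define C where "C = P c"
  define D where "D = P d"
  define al where "al = orient C D A"
  define be where "be = orient C D B"
  define ga where "ga = orient A B C"
  define de where "de = orient A B D"
  have al: "al < 0" using orient_sign(2)[OF cc, of c d a] o unfolding al_def A_def B_def C_def D_def by simp
  have be: "be > 0" using orient_sign(1)[OF cc, of c d b] o unfolding be_def A_def B_def C_def D_def by simp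
  have ga: "ga > 0" using orient_sign(1)[OF cc, of a b c] o unfolding ga_def A_def B_def C_def D_def by simp
  have de: "de < 0" using orient_sign(3)[OF cc, of a b d] o unfolding de_def A_def B_def C_def D_def by simp
  have id1: "be - al = ga - de" unfolding al_def be_def ga_def de_def orient_def by (simp add: algebra_simps)
  have id2: "be * A$i - al * B$i = ga * D$i - de * C$i" if "i = 1 \<or> i = 2" for i
    using that unfolding al_def be_def ga_def de_def orient_def by (auto simp: algebra_simps)
  define u where "u = - al / (be - al)"
  define s where "s = ga / (ga - de)"
  define x where "x = (1 - u) *\<^sub>R A + u *\<^sub>R B"
  have u: "0 \<le> u" "u \<le> 1" using al be unfolding u_def by (auto simp: field_simps)
  have s: "0 \<le> s" "s \<le> 1" using ga de unfolding s_def by (auto simp: field_simps)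
  have x1: "x \<in> closed_segment A B" unfolding closed_segment_def x_def using u by blast
  have "x = (1 - s) *\<^sub>R C + s *\<^sub>R D"
  proof (rule vec2_eqI)
    have ne: "be - al \<noteq> 0" using al be by simp
    have ne2: "ga - de \<noteq> 0" using ga de by simp
    have L: "x $ i = (be*A$i - al*B$i) / (be - al)" for i
      unfolding x_def u_def using ne by (simp add: divide_simps) (simp add: algebra_simps)?
    have R: "((1 - s) *\<^sub>R C + s *\<^sub>R D) $ i = (ga*D$i - de*C$i) / (ga - de)" for i
      unfolding s_def using ne2 by (simp add: divide_simps) (simp add: algebra_simps)?
    show "x $ 1 = ((1 - s) *\<^sub>R C + s *\<^sub>R D) $ 1"
      unfolding L R using id2[of 1] id1 by simp
    show "x $ 2 = ((1 - s) *\<^sub>R C + s *\<^sub>R D) $ 2"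
      unfolding L R using id2[of 2] id1 by simp
  qed
  then have x2: "x \<in> closed_segment C D" unfolding closed_segment_def using s by blast
  have "{a, b} \<inter> {c, d} = {}" using o by auto
  then show ?thesis unfolding crosses_def seg_pair using x1 x2 A_def B_def C_def D_def by auto
qed

lemma orient_zero_iff:
  assumes cc: "convex_clockwise P k" and ab: "a < b" "b < 2*k" and v: "v < 2*k"
  shows "orient (P a) (P b) (P v) = 0 \<longleftrightarrow> v = a \<or> v = b"
proof
  assume "orient (P a) (P b) (P v) = 0"
  then show "v = a \<or> v = b" using orient_sign[OF assms] by (metis less_irrefl linorder_neqE_nat)
qed (auto simp: orient_self1 orient_self2)

lemma noncross_side:
  assumes cc: "convex_clockwise P k" and ab: "a < b" "b < 2*k" and cd: "c < 2*k" "d < 2*k" "c \<noteq> d"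
    and ne: "{c, d} \<noteq> {a, b}"
    and side: "(\<forall>v\<in>{c,d}. v \<le> a \<or> b \<le> v) \<or> (\<forall>v\<in>{c,d}. a \<le> v \<and> v \<le> b)"
  shows "\<not> crosses P {a, b} {c, d}"
proof
  assume "crosses P {a, b} {c, d}"
  then obtain x where x1: "x \<in> closed_segment (P a) (P b)" and x2: "x \<in> closed_segment (P c) (P d)"
    and x3: "x \<notin> P ` ({a, b} \<inter> {c, d})"
    unfolding crosses_def seg_pair by blast
  define ori where "ori = orient (P a) (P b)"
  have o0: "ori x = 0" using on_seg_orient0[OF x1] ori_def by simp
  obtain u where u: "0 \<le> u" "u \<le> 1" and xu: "x = (1 - u) *\<^sub>R P c + u *\<^sub>R P d"
    using x2 unfolding closed_segment_def by blast
  have eq: "(1 - u) * ori (P c) + u * ori (P d) = 0" using o0 xu orient_comb ori_def by simp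
  have sg: "(\<forall>v\<in>{c,d}. v \<notin> {a,b} \<longrightarrow> ori (P v) < 0) \<or> (\<forall>v\<in>{c,d}. v \<notin> {a,b} \<longrightarrow> ori (P v) > 0)"
  proof (cases "\<forall>v\<in>{c,d}. v \<le> a \<or> b \<le> v")
    case True
    have "v \<in> {c,d} \<Longrightarrow> v \<notin> {a,b} \<Longrightarrow> ori (P v) < 0" for v
    proof -
      assume v: "v \<in> {c,d}" "v \<notin> {a,b}"
      then have "v < a \<or> b < v" "v < 2*k" using True cd by auto
      then show ?thesis using orient_sign(2,3)[OF cc ab, of v] unfolding ori_def by auto
    qed
    then show ?thesis by blast
  next
    case False
    then have "\<forall>v\<in>{c,d}. a \<le> v \<and> v \<le> b" using side by blast
    then have "v \<in> {c,d} \<Longrightarrow> v \<notin> {a,b} \<Longrightarrow> ori (P v) > 0" for v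
    proof -
      assume v: "v \<in> {c,d}" "v \<notin> {a,b}" and h: "\<forall>v\<in>{c,d}. a \<le> v \<and> v \<le> b"
      then have "a < v" "v < b" "v < 2*k" using cd by auto
      then show ?thesis using orient_sign(1)[OF cc ab, of v] unfolding ori_def by auto
    qed
    then show ?thesis by blast
  qed
  have z: "v \<in> {a,b} \<Longrightarrow> ori (P v) = 0" for v unfolding ori_def using orient_self1 orient_self2 by auto
  show False
  proof (cases "c \<in> {a,b}")
    case True
    then have "d \<notin> {a,b}" using ne cd(3) by auto
    then have "ori (P d) \<noteq> 0" using sg by auto
    moreover have "ori (P c) = 0" using z True by simp
    ultimately have "u = 0" using eq by simp
    then have "x = P c" using xu by simp
    then show False using x3 True by auto
  next
    case c: False
    show False
    proof (cases "d \<in> {a,b}")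
      case True
      then have "ori (P c) \<noteq> 0" using sg c by auto
      moreover have "ori (P d) = 0" using z True by simp
      ultimately have "u = 1" using eq by simp
      then have "x = P d" using xu by simp
      then show False using x3 True by auto
    next
      case False
      from sg c False have "(ori (P c) < 0 \<and> ori (P d) < 0) \<or> (ori (P c) > 0 \<and> ori (P d) > 0)" by auto
      then show False
      proof
        assume h: "ori (P c) < 0 \<and> ori (P d) < 0"
        have "(1 - u) * ori (P c) \<le> 0" "u * ori (P d) \<le> 0" using h u by (auto simp: mult_nonneg_nonpos)
        moreover have "(1 - u) * ori (P c) < 0 \<or> u * ori (P d) < 0" using h u
          by (cases "u = 1") (auto simp: mult_pos_neg)
        ultimately show False using eq by linarith
      next
        assume h: "ori (P c) > 0 \<and> ori (P d) > 0"
        have "(1 - u) * ori (P c) \<ge> 0" "u * ori (P d) \<ge> 0" using h u by auto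
        moreover have "(1 - u) * ori (P c) > 0 \<or> u * ori (P d) > 0" using h u
          by (cases "u = 1") auto
        ultimately show False using eq by linarith
      qed
    qed
  qed
qed

lemma cross_interleave:
  assumes cc: "convex_clockwise P k" and ab: "a < b" "b < 2*k" and cd: "c < 2*k" "d < 2*k"
    and dis: "c \<notin> {a,b}" "d \<notin> {a,b}"
    and il: "(a < c \<and> c < b) \<noteq> (a < d \<and> d < b)"
  shows "crosses P {a, b} {c, d}"
proof -
  have cd': "c \<noteq> d" using il by auto
  { fix c d assume cd: "c < 2*k" "d < 2*k" "c \<notin> {a,b}" "d \<notin> {a,b}" "a < c" "c < b" "\<not> (a < d \<and> d < b)"
    have "crosses P {a, b} {c, d}"
    proof (cases "d < a")
      case True
      then have "crosses P {d, c} {a, b}" using cross_core[OF cc, of d a c b] cd ab by simp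
      then show ?thesis using crosses_sym by (metis insert_commute)
    next
      case False
      then have "b < d" using cd by auto
      then show ?thesis using cross_core[OF cc, of a c b d] cd ab by simp
    qed }
  note X = this
  show ?thesis
  proof (cases "a < c \<and> c < b")
    case True then show ?thesis using X[of c d] assms by auto
  next
    case False
    then have "crosses P {a,b} {d,c}" using X[of d c] assms by auto
    then show ?thesis by (metis insert_commute)
  qed
qed


lemma mod_add_cancel_nat:
  assumes h: "((a::nat) + c) mod L = (b + c) mod L" shows "a mod L = b mod L"
proof -
  have "(int a + int c) mod int L = (int b + int c) mod int L"
    using h by (metis of_nat_add zmod_int)
  hence "((int a + int c) mod int L - int c) mod int L = ((int b + int c) mod int L - int c) mod int L" by simp
  hence "int a mod int L = int b mod int L" by (simp add: mod_diff_left_eq)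
  thus ?thesis by (metis of_nat_eq_iff zmod_int)
qed

definition nxt :: "nat \<Rightarrow> nat \<Rightarrow> nat" where "nxt L t = Suc t mod L"

lemma nxt_lt: "0 < L \<Longrightarrow> nxt L t < L" unfolding nxt_def by simp

lemma nxt_inj: assumes "t1 < L" "t2 < L" "nxt L t1 = nxt L t2" shows "t1 = t2"
proof -
  have "(t1 + 1) mod L = (t2 + 1) mod L" using assms(3) unfolding nxt_def by simp
  then have "t1 mod L = t2 mod L" by (rule mod_add_cancel_nat)
  then show ?thesis using assms by simp
qed

lemma nxt_mod: "nxt L (j mod L) = Suc j mod L" unfolding nxt_def by (simp add: mod_Suc_eq)

lemma nxt_ne: assumes "2 \<le> L" "t < L" shows "nxt L t \<noteq> t"
proof (cases "Suc t < L")
  case True then show ?thesis unfolding nxt_def by simp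
next
  case False then have "Suc t = L" using assms by simp
  then show ?thesis unfolding nxt_def using assms by simp
qed

lemma nxt_nxt_ne: assumes "3 \<le> L" "t < L" shows "nxt L (nxt L t) \<noteq> t"
proof -
  have e: "nxt L (nxt L t) = Suc (Suc t) mod L" unfolding nxt_def by (simp add: mod_Suc_eq)
  show ?thesis
  proof (cases "Suc (Suc t) < L")
    case True then show ?thesis unfolding e by simp
  next
    case False
    then have "Suc (Suc t) = L \<or> Suc (Suc t) = L + 1" using assms by linarith
    then show ?thesis
    proof
      assume "Suc (Suc t) = L" then show ?thesis unfolding e using assms by simp
    next
      assume h: "Suc (Suc t) = L + 1"
      have "(L + 1) mod L = 1 mod L" by (rule mod_add_self1[of L 1, unfolded add.commute[of 1 L]])
      then have "(L + 1) mod L = 1" using assms by simp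
      then show ?thesis unfolding e h using assms h by simp
    qed
  qed
qed

lemma nxt_small: "Suc t < L \<Longrightarrow> nxt L t = Suc t" unfolding nxt_def by simp
lemma nxt_last: "0 < L \<Longrightarrow> nxt L (L - 1) = 0" unfolding nxt_def by simp

lemma even_mod_even: "even (L::nat) \<Longrightarrow> even (j mod L) \<longleftrightarrow> even j"
  by (metis dvd_mod_iff)

lemma nxt_surj: assumes "t < L" shows "\<exists>p<L. nxt L p = t"
proof (cases t)
  case 0 then show ?thesis using assms by (intro exI[of _ "L - 1"]) (auto simp: nxt_def)
next
  case (Suc s) then show ?thesis using assms by (intro exI[of _ s]) (auto simp: nxt_def)
qed

lemma nxt_iter: assumes "(t0::nat) < L" "t < L" shows "\<exists>j. (t0 + j) mod L = t"
proof (cases "t0 \<le> t")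
  case True then show ?thesis using assms by (intro exI[of _ "t - t0"]) auto
next
  case False then show ?thesis using assms
    by (intro exI[of _ "L - t0 + t"]) (simp add: add.assoc[symmetric])
qed

section \<open>Sorted lists\<close>

lemma ss_less: assumes "sorted_wrt (<) ys" "i < j" "j < length ys" shows "ys!i < ys!j"
  using assms sorted_wrt_nth_less by blast

lemma ss_less_iff: assumes "sorted_wrt (<) (ys::nat list)" "i < length ys" "j < length ys"
  shows "ys!i < ys!j \<longleftrightarrow> i < j"
proof (cases i j rule: linorder_cases)
  case less then show ?thesis using ss_less[OF assms(1) less assms(3)] by simp
next
  case equal then show ?thesis by simp
next
  case greater then show ?thesis using ss_less[OF assms(1) greater assms(2)] by simp
qed

lemma ss_eq_iff: assumes "sorted_wrt (<) (ys::nat list)" "i < length ys" "j < length ys"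
  shows "ys!i = ys!j \<longleftrightarrow> i = j"
proof (cases i j rule: linorder_cases)
  case less then show ?thesis using ss_less[OF assms(1) less assms(3)] by simp
next
  case equal then show ?thesis by simp
next
  case greater then show ?thesis using ss_less[OF assms(1) greater assms(2)] by simp
qed

lemma consec_side:
  assumes s: "sorted_wrt (<) (ys::nat list)" and L: "2 \<le> length ys" and t: "t < length ys"
  shows "\<exists>a b. a < b \<and> {ys!t, ys!(nxt (length ys) t)} = {a,b} \<and>
     ((\<forall>v\<in>set ys. v \<le> a \<or> b \<le> v) \<or> (\<forall>v\<in>set ys. a \<le> v \<and> v \<le> b))"
proof (cases "Suc t < length ys")
  case True
  have n: "nxt (length ys) t = Suc t" using True nxt_small by simp
  have "\<forall>v\<in>set ys. v \<le> ys!t \<or> ys!Suc t \<le> v"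
  proof
    fix v assume "v \<in> set ys"
    then obtain i where i: "i < length ys" "v = ys!i" by (auto simp: in_set_conv_nth)
    show "v \<le> ys!t \<or> ys!Suc t \<le> v"
    proof (cases "i \<le> t")
      case True
      then show ?thesis using ss_less_iff[OF s i(1) t] i by (cases "i = t") auto
    next
      case False
      then have "Suc t \<le> i" by simp
      then show ?thesis using ss_less_iff[OF s \<open>Suc t < length ys\<close> i(1)] i by (cases "i = Suc t") auto
    qed
  qed
  moreover have "ys!t < ys!Suc t" using ss_less[OF s _ True, of t] by simp
  ultimately show ?thesis unfolding n by (intro exI[of _ "ys!t"] exI[of _ "ys!Suc t"]) simp
next
  case False
  then have t': "t = length ys - 1" using t by simp
  have "ys \<noteq> []" using L by auto
  then have n: "nxt (length ys) t = 0" unfolding t' using nxt_last[of "length ys"] by simp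
  have "\<forall>v\<in>set ys. ys!0 \<le> v \<and> v \<le> ys!t"
  proof
    fix v assume "v \<in> set ys"
    then obtain i where i: "i < length ys" "v = ys!i" by (auto simp: in_set_conv_nth)
    show "ys!0 \<le> v \<and> v \<le> ys!t"
    proof
      show "ys!0 \<le> v" using ss_less_iff[OF s _ i(1), of 0] i by (cases "i = 0") (auto, fastforce)
      show "v \<le> ys!t" using ss_less_iff[OF s i(1) t] i t' by (cases "i = t") auto
    qed
  qed
  moreover have "ys!0 < ys!t" using ss_less[OF s, of 0 t] t' L by simp
  ultimately show ?thesis unfolding n by (intro exI[of _ "ys!0"] exI[of _ "ys!t"]) (simp add: insert_commute)
qed

section \<open>Matchings\<close>

lemma im_fin: "is_matching P k M \<Longrightarrow> finite M"
  unfolding is_matching_def by (elim conjE)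
lemma im_edge: "is_matching P k M \<Longrightarrow> e \<in> M \<Longrightarrow> e \<subseteq> {0..<2*k} \<and> card e = 2"
  unfolding is_matching_def by (elim conjE) (erule (1) bspec)
lemma im_nc: "is_matching P k M \<Longrightarrow> e \<in> M \<Longrightarrow> f \<in> M \<Longrightarrow> e \<noteq> f \<Longrightarrow> \<not> crosses P e f"
  unfolding is_matching_def by (elim conjE) blast
lemma im_cov: "is_matching P k M \<Longrightarrow> i < 2*k \<Longrightarrow> \<exists>!e. e \<in> M \<and> i \<in> e"
  unfolding is_matching_def by (elim conjE) (erule allE, erule mp)

definition mate :: "nat set set \<Rightarrow> nat \<Rightarrow> nat" where "mate M v = (SOME w. {v,w} \<in> M)"

lemma match_edge: assumes "is_matching P k M" "e \<in> M" shows "\<exists>a b. a < b \<and> b < 2*k \<and> e = {a,b}"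
proof -
  have c: "card e = 2" and sub: "e \<subseteq> {0..<2*k}" using im_edge[OF assms] by auto
  from c obtain x y where xy: "e = {x,y}" "x \<noteq> y" by (auto simp: card_2_iff)
  show ?thesis
  proof (cases "x < y")
    case True then show ?thesis using xy sub by (intro exI[of _ x] exI[of _ y]) auto
  next
    case False then have "y < x" using xy by simp
    then show ?thesis using xy sub by (intro exI[of _ y] exI[of _ x]) auto
  qed
qed

lemma match_sub: assumes "is_matching P k M" "e \<in> M" "v \<in> e" shows "v < 2*k"
proof -
  have "e \<subseteq> {0..<2*k}" using im_edge[OF assms(1,2)] by auto
  then show ?thesis using assms(3) by auto
qed

lemma match_unique: assumes "is_matching P k M" "e \<in> M" "f \<in> M" "v \<in> e" "v \<in> f" shows "e = f"
proof -
  have "v < 2*k" using match_sub assms by blast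
  then have "\<exists>!e. e \<in> M \<and> v \<in> e" using im_cov[OF assms(1)] by simp
  then obtain e0 where "\<And>y. y \<in> M \<and> v \<in> y \<Longrightarrow> y = e0" by (elim ex1E) auto
  then show ?thesis using assms(2-5) by metis
qed

lemma match_disj: "is_matching P k M \<Longrightarrow> e \<in> M \<Longrightarrow> f \<in> M \<Longrightarrow> e \<noteq> f \<Longrightarrow> e \<inter> f = {}"
  using match_unique by blast

lemma match_ne: assumes "is_matching P k M" "{v,w} \<in> M" shows "v \<noteq> w"
proof -
  have "card {v,w} = 2" using im_edge[OF assms] by simp
  then show ?thesis by auto
qed

lemma mate: assumes "is_matching P k M" "v < 2*k"
  shows "{v, mate M v} \<in> M" "mate M v \<noteq> v" "mate M v < 2*k"
proof -
  have "\<exists>!e. e \<in> M \<and> v \<in> e" using im_cov[OF assms] by simp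
  then obtain e where e: "e \<in> M" "v \<in> e" by (elim ex1E) auto
  obtain a b where ab: "a < b" "b < 2*k" "e = {a,b}" using match_edge[OF assms(1) e(1)] by blast
  have "\<exists>w. {v,w} \<in> M"
  proof (cases "v = a")
    case True then show ?thesis using e ab by blast
  next
    case False then have "v = b" using e ab by simp
    then show ?thesis using e ab by (intro exI[of _ a]) (simp add: insert_commute)
  qed
  then show m: "{v, mate M v} \<in> M" unfolding mate_def by (rule someI_ex)
  show "mate M v \<noteq> v" using match_ne[OF assms(1) m] by simp
  show "mate M v < 2*k" using match_sub[OF assms(1) m] by simp
qed

lemma mate_eq: assumes "is_matching P k M" "{v,w} \<in> M" shows "mate M v = w"
proof -
  have v: "v < 2*k" using match_sub assms by blast
  have "{v, mate M v} = {v,w}" using match_unique[OF assms(1) mate(1)[OF assms(1) v] assms(2), of v] by simp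
  moreover have "v \<noteq> w" using match_ne[OF assms] .
  moreover have "mate M v \<noteq> v" using mate(2)[OF assms(1) v] .
  ultimately show ?thesis by (auto simp: doubleton_eq_iff)
qed

lemma mate_mate: assumes "is_matching P k M" "v < 2*k" shows "mate M (mate M v) = v"
proof -
  have "{mate M v, v} \<in> M" using mate(1)[OF assms] by (simp add: insert_commute)
  then show ?thesis using mate_eq[OF assms(1)] by blast
qed

lemma edge_mate: assumes "is_matching P k M" "e \<in> M" "v \<in> e" shows "e = {v, mate M v}"
  using match_unique[OF assms(1) assms(2) mate(1)[OF assms(1) match_sub[OF assms]], of v] assms(3) by simp

lemma match_card_Union: assumes "is_matching P k M" "E \<subseteq> M" shows "card (\<Union>E) = 2 * card E"
proof -
  have pw: "pairwise disjnt E"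
  proof (rule pairwiseI)
    fix x y assume "x \<in> E" "y \<in> E" "x \<noteq> y"
    then show "disjnt x y" using match_disj[OF assms(1), of x y] assms(2) unfolding disjnt_def by auto
  qed
  have fin: "\<And>A. A \<in> E \<Longrightarrow> finite A"
  proof -
    fix A assume "A \<in> E"
    then have "card A = 2" using im_edge[OF assms(1)] assms(2) by blast
    then show "finite A" by (simp add: card_ge_0_finite)
  qed
  have "card (\<Union>E) = sum card E" by (rule card_Union_disjoint[OF pw fin])
  also have "\<dots> = sum (\<lambda>_. 2) E"
  proof (rule sum.cong)
    fix x assume "x \<in> E" then show "card x = 2" using im_edge[OF assms(1)] assms(2) by blast
  qed simp
  finally show ?thesis by simp
qed

lemma match_Union_fin: assumes "is_matching P k M" "E \<subseteq> M" shows "finite (\<Union>E)" "\<Union>E \<subseteq> {..<2*k}"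
proof -
  show s: "\<Union>E \<subseteq> {..<2*k}"
  proof
    fix v assume "v \<in> \<Union>E"
    then obtain e where "e \<in> E" "v \<in> e" by blast
    then show "v \<in> {..<2*k}" using match_sub[OF assms(1), of e v] assms(2) by auto
  qed
  show "finite (\<Union>E)" using finite_subset[OF s] by simp
qed


lemma pairs_alt: "pairs N r s = (\<lambda>i. {Qlab N r (2*i + s), Qlab N r (2*i + s + 1)}) ` {..<card N}"
  unfolding pairs_def setcompr_eq_image lessThan_def by simp

lemma card_pairs_le: "card (pairs N r s) \<le> card N"
  unfolding pairs_alt using card_image_le[of "{..<card N}"] by simp

lemma Qlab_eq: "Qlab N r j = sorted_list_of_set (\<Union>N) ! ((j + r) mod length (sorted_list_of_set (\<Union>N)))"
  unfolding Qlab_def Let_def by simp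

locale flipset =
  fixes P k M N
  assumes mM: "is_matching P k M" and fl: "flippable P M N"
begin

abbreviation "Y \<equiv> \<Union>N"
abbreviation "ys \<equiv> sorted_list_of_set Y"
abbreviation "L \<equiv> length ys"

lemma NM: "N \<subseteq> M" using fl unfolding flippable_def by (elim conjE)
lemma cN: "card N \<ge> 2" using fl unfolding flippable_def by (elim conjE)

lemma finY: "finite Y" and Ysub: "Y \<subseteq> {..<2*k}" using match_Union_fin[OF mM NM] by auto

lemma setys: "set ys = Y" using finY by simp
lemma sorted_ys: "sorted_wrt (<) ys" by (simp add: strict_sorted_list_of_set)
lemma L_eq: "L = 2 * card N" using match_card_Union[OF mM NM] finY by simp
lemma L4: "4 \<le> L" using L_eq cN by simp
lemma L_even: "even L" using L_eq by simp

lemma ys_in: "i < L \<Longrightarrow> ys!i \<in> Y" using nth_mem[of i ys] setys by simp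
lemma ys_idx: "v \<in> Y \<Longrightarrow> \<exists>i<L. ys!i = v" using setys in_set_conv_nth[of v ys] by simp
lemma ys_inj: "i < L \<Longrightarrow> j < L \<Longrightarrow> ys!i = ys!j \<longleftrightarrow> i = j" using ss_eq_iff[OF sorted_ys] by blast

lemma Qlab': "Qlab N r j = ys ! ((j + r) mod L)" using Qlab_eq by simp

lemma pairs_consec: assumes "f \<in> pairs N r s" shows "\<exists>t<L. f = {ys!t, ys!(nxt L t)}"
proof -
  obtain i where f: "f = {Qlab N r (2*i + s), Qlab N r (2*i + s + 1)}" using assms unfolding pairs_def by blast
  have "Qlab N r (2*i + s + 1) = ys!(nxt L ((2*i + s + r) mod L))"
    unfolding Qlab' nxt_mod by (simp add: add.commute add.left_commute)
  then show ?thesis using f L4 unfolding Qlab' by (intro exI[of _ "(2*i + s + r) mod L"]) auto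
qed

lemma L0: "0 < L" using L4 by simp

lemma pairs_sub: assumes "f \<in> pairs N r s" shows "f \<subseteq> Y"
proof -
  obtain t where "t < L" "f = {ys!t, ys!(nxt L t)}" using pairs_consec[OF assms] by blast
  then show ?thesis using ys_in[of t] ys_in[of "nxt L t"] nxt_lt[OF L0, of t] by simp
qed

lemma consec_in_pairs: assumes t: "t < L" shows "{ys!t, ys!(nxt L t)} \<in> pairs N r 0 \<union> pairs N r 1"
proof -
  have "t mod L < L" using t by simp
  obtain j where j: "(r mod L + j) mod L = t" using nxt_iter[OF _ t, of "r mod L"] L4 by auto
  define j' where "j' = j mod L"
  have jL: "j' < L" unfolding j'_def using L4 by simp
  have h1: "(j' + r) mod L = (j + r) mod L" unfolding j'_def by (rule mod_add_left_eq)
  have h2: "(r mod L + j) mod L = (r + j) mod L" by (rule mod_add_left_eq)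
  have tj: "(j' + r) mod L = t" using j h1 h2 by (simp add: add.commute)
  have cN': "card N = L div 2" using L_eq by simp
  show ?thesis
  proof (cases "even j'")
    case True
    then obtain i where i: "j' = 2*i" by blast
    have "i < card N" using jL i L_eq by simp
    moreover have "Qlab N r (2*i + 0) = ys!t" using tj i Qlab' by simp
    moreover have "Qlab N r (2*i + 0 + 1) = ys!(nxt L t)" using tj i Qlab' nxt_mod[of L "j' + r"]
      by (simp add: add.commute add.left_commute)
    ultimately have "{ys!t, ys!(nxt L t)} \<in> pairs N r 0" unfolding pairs_def
      by (intro CollectI exI[of _ i]) simp
    then show ?thesis by simp
  next
    case False
    then obtain i where i: "j' = 2*i + 1" by (metis oddE)
    have "i < card N" using jL i L_eq by simp
    moreover have "Qlab N r (2*i + 1) = ys!t" using tj i Qlab' by simp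
    moreover have "Qlab N r (2*i + 1 + 1) = ys!(nxt L t)" using tj i Qlab' nxt_mod[of L "j' + r"]
      by (simp add: add.commute add.left_commute)
    ultimately have "{ys!t, ys!(nxt L t)} \<in> pairs N r 1" unfolding pairs_def
      by (intro CollectI exI[of _ i]) simp
    then show ?thesis by simp
  qed
qed

lemma pairs_01_ne: assumes "e \<in> pairs N r 0" "f \<in> pairs N r 1" shows "e \<noteq> f"
proof
  assume ef: "e = f"
  obtain i where e: "e = {Qlab N r (2*i + 0), Qlab N r (2*i + 0 + 1)}" using assms(1) unfolding pairs_def by blast
  obtain j where f: "f = {Qlab N r (2*j + 1), Qlab N r (2*j + 1 + 1)}" using assms(2) unfolding pairs_def by blast
  define t1 where "t1 = (2*i + r) mod L"
  define t2 where "t2 = (2*j + 1 + r) mod L"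
  have L0: "0 < L" using L4 by simp
  have t1: "t1 < L" "t2 < L" unfolding t1_def t2_def using L0 by auto
  have e': "e = {ys!t1, ys!(nxt L t1)}" unfolding e Qlab' t1_def nxt_mod by (simp add: add.commute add.left_commute)
  have f': "f = {ys!t2, ys!(nxt L t2)}" unfolding f Qlab' t2_def nxt_mod by (simp add: add.commute add.left_commute)
  have n1: "nxt L t1 < L" "nxt L t2 < L" using nxt_lt L0 by auto
  have "(t1 = t2 \<and> nxt L t1 = nxt L t2) \<or> (t1 = nxt L t2 \<and> nxt L t1 = t2)"
    using ef e' f' ys_inj t1 n1 by (auto simp: doubleton_eq_iff)
  then show False
  proof
    assume "t1 = t2 \<and> nxt L t1 = nxt L t2"
    then have "(2*i + r) mod L = (2*j + 1 + r) mod L" unfolding t1_def t2_def by simp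
    then have "(2*i) mod L = (2*j+1) mod L" by (rule mod_add_cancel_nat)
    then show False using even_mod_even[OF L_even, of "2*i"] even_mod_even[OF L_even, of "2*j+1"] by simp
  next
    assume h: "t1 = nxt L t2 \<and> nxt L t1 = t2"
    then have "nxt L (nxt L t1) = t1" by metis
    then show False using nxt_nxt_ne[of L t1] L4 t1 by simp
  qed
qed

lemma consec_noncross:
  assumes cc: "convex_clockwise P k" and t: "t < L" and f: "f = {c,d}" "f \<subseteq> Y" "c \<noteq> d"
    and ne: "f \<noteq> {ys!t, ys!(nxt L t)}"
  shows "\<not> crosses P {ys!t, ys!(nxt L t)} f"
proof -
  obtain a b where ab: "a < b" "{ys!t, ys!(nxt L t)} = {a,b}"
    and side: "(\<forall>v\<in>set ys. v \<le> a \<or> b \<le> v) \<or> (\<forall>v\<in>set ys. a \<le> v \<and> v \<le> b)"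
    using consec_side[OF sorted_ys _ t] L4 by auto
  have "{a,b} \<subseteq> Y" using ab(2)[symmetric] ys_in[OF t] ys_in[OF nxt_lt[OF L0, of t]] by simp
  then have b: "b < 2*k" using Ysub by auto
  have cd: "c < 2*k" "d < 2*k" using f Ysub by auto
  have "(\<forall>v\<in>{c,d}. v \<le> a \<or> b \<le> v) \<or> (\<forall>v\<in>{c,d}. a \<le> v \<and> v \<le> b)"
    using side f setys by blast
  then show ?thesis using noncross_side[OF cc ab(1) b cd f(3)] ne f ab(2) by simp
qed

definition rr where "rr = (SOME r. N = pairs N r 0)"

lemma rr: "N = pairs N rr 0"
proof -
  have "\<exists>r. N = pairs N r 0" using fl unfolding flippable_def by (elim conjE)
  then show ?thesis unfolding rr_def by (rule someI_ex)
qed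

lemma flip_eq: "flip N = pairs N rr 1" unfolding flip_def rr_def by simp

lemma consec_in: "t < L \<Longrightarrow> {ys!t, ys!(nxt L t)} \<in> N \<union> flip N"
  using consec_in_pairs[of t rr] rr flip_eq by simp

lemma flip_sub: "f \<in> flip N \<Longrightarrow> f \<subseteq> Y" using pairs_sub flip_eq by simp

lemma N_flip_disj: "e \<in> N \<Longrightarrow> f \<in> flip N \<Longrightarrow> e \<noteq> f"
  using pairs_01_ne rr flip_eq by metis

lemma N_flip_noncross: assumes cc: "convex_clockwise P k" and "e \<in> N" "f \<in> flip N"
  shows "\<not> crosses P e f"
proof -
  obtain t where t: "t < L" "e = {ys!t, ys!(nxt L t)}" using pairs_consec rr assms(2) by blast
  obtain s where s: "s < L" "f = {ys!s, ys!(nxt L s)}" using pairs_consec flip_eq assms(3) by blast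
  have "ys!s \<noteq> ys!(nxt L s)" using ys_inj[OF s(1) nxt_lt[OF L0, of s]] nxt_ne[of L s] L4 s(1) by simp
  moreover have "f \<subseteq> Y" using flip_sub assms(3) by simp
  moreover have "f \<noteq> e" using N_flip_disj assms(2,3) by metis
  ultimately show ?thesis using consec_noncross[OF cc t(1) s(2)] t(2) by simp
qed

lemma connected:
  assumes cl: "\<And>f v. f \<in> N \<union> flip N \<Longrightarrow> v \<in> f \<Longrightarrow> v \<in> S \<Longrightarrow> f \<subseteq> S" and y: "y \<in> Y" "y \<in> S"
  shows "Y \<subseteq> S"
proof
  fix v assume v: "v \<in> Y"
  obtain t0 where t0: "t0 < L" "ys!t0 = y" using ys_idx y by blast
  obtain t where t: "t < L" "ys!t = v" using ys_idx v by blast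
  have L0: "0 < L" using L4 by simp
  have "ys!((t0 + j) mod L) \<in> S" for j
  proof (induction j)
    case 0 then show ?case using t0 y by simp
  next
    case (Suc j)
    have "{ys!((t0 + j) mod L), ys!(nxt L ((t0 + j) mod L))} \<in> N \<union> flip N" using consec_in L0 by simp
    then have "ys!(nxt L ((t0 + j) mod L)) \<in> S" using cl Suc by blast
    then show ?case by (simp add: nxt_mod)
  qed
  then show "v \<in> S" using nxt_iter[OF t0(1) t(1)] t by auto
qed

end


locale gpart =
  fixes P k M M' Pt
  assumes mM: "is_matching P k M" and mM': "is_matching P k M'" and gp: "good_partition P M M' Pt"
begin

lemma parts: obtains "\<Union>Pt = M" "{} \<notin> Pt" "\<forall>N1\<in>Pt. \<forall>N2\<in>Pt. N1 \<noteq> N2 \<longrightarrow> N1 \<inter> N2 = {}"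
    "\<forall>N\<in>Pt. flippable P M N"
    "\<forall>N1\<in>Pt. \<forall>N2\<in>Pt. N1 \<noteq> N2 \<longrightarrow> convex hull (P ` \<Union>N1) \<inter> convex hull (P ` \<Union>N2) = {}"
    "M' = (M - \<Union>Pt) \<union> \<Union>(flip ` Pt)"
proof -
  note c = gp[unfolded good_partition_def]
  show thesis by (rule that[OF c[THEN conjunct1] c[THEN conjunct2, THEN conjunct1]
     c[THEN conjunct2, THEN conjunct2, THEN conjunct1]
     c[THEN conjunct2, THEN conjunct2, THEN conjunct2, THEN conjunct1]
     c[THEN conjunct2, THEN conjunct2, THEN conjunct2, THEN conjunct2, THEN conjunct1]
     c[THEN conjunct2, THEN conjunct2, THEN conjunct2, THEN conjunct2, THEN conjunct2]])
qed

lemma U: "\<Union>Pt = M" by (rule parts)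
lemma nemp: "{} \<notin> Pt" by (rule parts)
lemma pdisj: assumes "N1 \<in> Pt" "N2 \<in> Pt" "N1 \<noteq> N2" shows "N1 \<inter> N2 = {}"
proof (rule parts)
  assume h: "\<forall>N1\<in>Pt. \<forall>N2\<in>Pt. N1 \<noteq> N2 \<longrightarrow> N1 \<inter> N2 = {}"
  show ?thesis using h assms by simp
qed
lemma pflip: assumes "N \<in> Pt" shows "flippable P M N"
proof (rule parts)
  assume h: "\<forall>N\<in>Pt. flippable P M N"
  show ?thesis using h assms by simp
qed
lemma phull: assumes "N1 \<in> Pt" "N2 \<in> Pt" "N1 \<noteq> N2" shows
    "convex hull (P ` \<Union>N1) \<inter> convex hull (P ` \<Union>N2) = {}"
proof (rule parts)
  assume h: "\<forall>N1\<in>Pt. \<forall>N2\<in>Pt. N1 \<noteq> N2 \<longrightarrow> convex hull (P ` \<Union>N1) \<inter> convex hull (P ` \<Union>N2) = {}"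
  show ?thesis using h assms by simp
qed
lemma M'eq: "M' = \<Union>(flip ` Pt)"
proof -
  have "M' = (M - \<Union>Pt) \<union> \<Union>(flip ` Pt)" by (rule parts)
  then show ?thesis using U by simp
qed

lemma fs: "N \<in> Pt \<Longrightarrow> flipset P k M N" using pflip mM by (simp add: flipset_def)

lemma NsubM: "N \<in> Pt \<Longrightarrow> N \<subseteq> M" using U by blast

lemma vdisj: assumes "N1 \<in> Pt" "N2 \<in> Pt" "v \<in> \<Union>N1" "v \<in> \<Union>N2" shows "N1 = N2"
proof -
  obtain e1 where e1: "e1 \<in> N1" "v \<in> e1" using assms(3) by blast
  obtain e2 where e2: "e2 \<in> N2" "v \<in> e2" using assms(4) by blast
  have "e1 \<in> M" "e2 \<in> M" using e1 e2 NsubM assms(1,2) by blast+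
  then have "e1 = e2" using match_unique[OF mM _ _ e1(2) e2(2)] by simp
  then have "N1 \<inter> N2 \<noteq> {}" using e1 e2 by blast
  then show ?thesis using pdisj assms(1,2) by blast
qed

lemma closure: assumes "N \<in> Pt" "f \<in> M \<union> M'" "v \<in> f" "v \<in> \<Union>N" shows "f \<subseteq> \<Union>N"
proof (cases "f \<in> M")
  case True
  then obtain N'' where N'': "N'' \<in> Pt" "f \<in> N''" using U by blast
  then have "N'' = N" using vdisj[OF N''(1) assms(1), of v] assms(3,4) by blast
  then show ?thesis using N'' by blast
next
  case False
  then have "f \<in> M'" using assms(2) by blast
  then obtain N'' where N'': "N'' \<in> Pt" "f \<in> flip N''" using M'eq by blast
  have fsub: "f \<subseteq> \<Union>N''" using flipset.flip_sub[OF fs[OF N''(1)] N''(2)] .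
  then have "N'' = N" using vdisj[OF N''(1) assms(1), of v] assms(3,4) by blast
  then show ?thesis using fsub by simp
qed

lemma N_char: assumes "N \<in> Pt" shows "N = {e \<in> M. e \<subseteq> \<Union>N}"
proof
  show "N \<subseteq> {e \<in> M. e \<subseteq> \<Union>N}" using NsubM[OF assms] by blast
  show "{e \<in> M. e \<subseteq> \<Union>N} \<subseteq> N"
  proof
    fix e assume e: "e \<in> {e \<in> M. e \<subseteq> \<Union>N}"
    then have eM: "e \<in> M" "e \<subseteq> \<Union>N" by auto
    obtain a b where ab: "a < b" "e = {a,b}" using match_edge[OF mM eM(1)] by blast
    then obtain e' where e': "e' \<in> N" "a \<in> e'" using eM(2) by blast
    have "e' \<in> M" using e' NsubM[OF assms] by blast
    then have "e = e'" using match_unique[OF mM eM(1) _ _ e'(2)] ab by simp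
    then show "e \<in> N" using e' by simp
  qed
qed

lemma flipM': "N \<in> Pt \<Longrightarrow> flip N \<subseteq> M'" using M'eq by blast

end

lemma unique_partition:
  assumes mM: "is_matching P k M" and mM': "is_matching P k M'"
    and g1: "good_partition P M M' Pt1" and g2: "good_partition P M M' Pt2"
  shows "Pt1 \<subseteq> Pt2"
proof
  interpret A: gpart P k M M' Pt1 using mM mM' g1 by (simp add: gpart_def)
  interpret B: gpart P k M M' Pt2 using mM mM' g2 by (simp add: gpart_def)
  fix N1 assume N1: "N1 \<in> Pt1"
  have "N1 \<noteq> {}" using A.nemp N1 by blast
  then obtain e where e: "e \<in> N1" by blast
  then have "e \<in> M" using A.NsubM N1 by blast
  then obtain N2 where N2: "N2 \<in> Pt2" "e \<in> N2" using B.U by blast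
  obtain a b where ab: "a < b" "e = {a,b}" using match_edge[OF mM \<open>e \<in> M\<close>] by blast
  have aN1: "a \<in> \<Union>N1" and aN2: "a \<in> \<Union>N2" using ab e N2 by auto
  have s1: "\<Union>N1 \<subseteq> \<Union>N2"
  proof (rule flipset.connected[OF A.fs[OF N1]])
    fix f v assume f: "f \<in> N1 \<union> flip N1" "v \<in> f" "v \<in> \<Union>N2"
    have "f \<in> M \<union> M'" using f(1) A.NsubM[OF N1] A.flipM'[OF N1] by blast
    then show "f \<subseteq> \<Union>N2" using B.closure[OF N2(1) _ f(2,3)] by simp
  qed (use aN1 aN2 in auto)
  have s2: "\<Union>N2 \<subseteq> \<Union>N1"
  proof (rule flipset.connected[OF B.fs[OF N2(1)]])
    fix f v assume f: "f \<in> N2 \<union> flip N2" "v \<in> f" "v \<in> \<Union>N1"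
    have "f \<in> M \<union> M'" using f(1) B.NsubM[OF N2(1)] B.flipM'[OF N2(1)] by blast
    then show "f \<subseteq> \<Union>N1" using A.closure[OF N1 _ f(2,3)] by simp
  qed (use aN1 aN2 in auto)
  have "N1 = N2" using A.N_char[OF N1] B.N_char[OF N2(1)] s1 s2 by simp
  then show "N1 \<in> Pt2" using N2 by simp
qed

lemma partition_dc:
  assumes cc: "convex_clockwise P k" and mM: "is_matching P k M" and mM': "is_matching P k M'"
    and g: "good_partition P M M' Pt"
  shows "disjoint_compatible P M M'"
proof -
  interpret A: gpart P k M M' Pt using mM mM' g by (simp add: gpart_def)
  have d: "M \<inter> M' = {}"
  proof (rule ccontr)
    assume "M \<inter> M' \<noteq> {}"
    then obtain f where f: "f \<in> M" "f \<in> M'" by blast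
    obtain N where N: "N \<in> Pt" "f \<in> flip N" using f(2) A.M'eq by blast
    obtain N'' where N'': "N'' \<in> Pt" "f \<in> N''" using f(1) A.U by blast
    obtain a b where ab: "a < b" "f = {a,b}" using match_edge[OF mM f(1)] by blast
    have "f \<subseteq> \<Union>N" using flipset.flip_sub[OF A.fs[OF N(1)] N(2)] .
    then have "N'' = N" using A.vdisj[OF N''(1) N(1), of a] N''(2) ab by blast
    then show False using flipset.N_flip_disj[OF A.fs[OF N(1)]] N N''(2) by blast
  qed
  have nc: "\<not> crosses P e f" if e: "e \<in> M" and f: "f \<in> M'" for e f
  proof -
    obtain N1 where N1: "N1 \<in> Pt" "e \<in> N1" using e A.U by blast
    obtain N2 where N2: "N2 \<in> Pt" "f \<in> flip N2" using f A.M'eq by blast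
    show ?thesis
    proof (cases "N1 = N2")
      case True
      then show ?thesis using flipset.N_flip_noncross[OF A.fs[OF N2(1)] cc] N1 N2 by blast
    next
      case False
      have "e \<subseteq> \<Union>N1" using N1 by blast
      then have se: "seg P e \<subseteq> convex hull (P ` \<Union>N1)" unfolding seg_def by (intro hull_mono image_mono)
      have "f \<subseteq> \<Union>N2" using flipset.flip_sub[OF A.fs[OF N2(1)] N2(2)] .
      then have sf: "seg P f \<subseteq> convex hull (P ` \<Union>N2)" unfolding seg_def by (intro hull_mono image_mono)
      have "seg P e \<inter> seg P f = {}" using A.phull[OF N1(1) N2(1) False] se sf by blast
      then show ?thesis unfolding crosses_def by blast
    qed
  qed
  show ?thesis unfolding disjoint_compatible_def using d nc by blast
qed


lemma even_card_inv:
  assumes "finite S" "\<And>x. x \<in> S \<Longrightarrow> f x \<in> S \<and> f x \<noteq> x \<and> f (f x) = x"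
  shows "even (card S)"
  using assms
proof (induction "card S" arbitrary: S rule: less_induct)
  case less
  show ?case
  proof (cases "S = {}")
    case True then show ?thesis by simp
  next
    case False
    then obtain x where x: "x \<in> S" by blast
    define S' where "S' = S - {x, f x}"
    have fx: "f x \<in> S" "f x \<noteq> x" using less.prems(2)[OF x] by auto
    have cS: "card S = card S' + 2"
    proof -
      have "card S' = card S - card {x, f x}" unfolding S'_def
        using fx x less.prems(1) by (intro card_Diff_subset) auto
      moreover have "card {x, f x} = 2" using fx by simp
      moreover have "card {x, f x} \<le> card S" using fx x less.prems(1) by (intro card_mono) auto
      ultimately show ?thesis by simp
    qed
    have "even (card S')"
    proof (rule less.hyps)
      show "card S' < card S" using cS by simp
      show "finite S'" using less.prems(1) unfolding S'_def by simp
      fix y assume y: "y \<in> S'"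
      then have yS: "y \<in> S" "y \<noteq> x" "y \<noteq> f x" unfolding S'_def by auto
      have h: "f y \<in> S \<and> f y \<noteq> y \<and> f (f y) = y" using less.prems(2)[OF yS(1)] .
      have "f y \<noteq> x" using h yS less.prems(2)[OF x] by metis
      moreover have "f y \<noteq> f x" using h yS less.prems(2)[OF x] by metis
      ultimately show "f y \<in> S' \<and> f y \<noteq> y \<and> f (f y) = y" using h unfolding S'_def by simp
    qed
    then show ?thesis using cS by simp
  qed
qed

definition adj :: "nat set set \<Rightarrow> nat set set \<Rightarrow> (nat \<times> nat) set" where
  "adj M M' = {(u,v). {u,v} \<in> M \<union> M'}"
definition comp :: "nat set set \<Rightarrow> nat set set \<Rightarrow> nat \<Rightarrow> nat set" where
  "comp M M' a = {v. (a,v) \<in> (adj M M')\<^sup>*}"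

lemma comp_swap: "comp M M' = comp M' M"
  unfolding comp_def adj_def by (simp add: Un_commute)

lemma orient_swap12: "orient b a c = - orient a b c"
  unfolding orient_def by (simp add: algebra_simps)

locale dcset =
  fixes P k M M'
  assumes cc: "convex_clockwise P k" and mM: "is_matching P k M" and mM': "is_matching P k M'"
    and disj: "M \<inter> M' = {}" and nc: "\<And>e f. e \<in> M \<Longrightarrow> f \<in> M' \<Longrightarrow> \<not> crosses P e f"
begin

lemma swap: "dcset P k M' M"
  unfolding dcset_def using cc mM mM' disj nc crosses_sym by blast

abbreviation C where "C \<equiv> comp M M'"

lemma E_sub: assumes "{u,v} \<in> M \<union> M'" shows "u < 2*k" "v < 2*k" "u \<noteq> v"
proof -
  have "{u,v} \<in> M \<or> {u,v} \<in> M'" using assms by simp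
  then show "u < 2*k" "v < 2*k" "u \<noteq> v"
    using match_sub[OF mM, of "{u,v}"] match_sub[OF mM', of "{u,v}"] match_ne[OF mM, of u v] match_ne[OF mM', of u v]
    by auto
qed

lemma E_nc: assumes e: "e \<in> M \<union> M'" and f: "f \<in> M \<union> M'" and ef: "e \<inter> f = {}"
  shows "\<not> crosses P e f"
proof -
  have "e \<noteq> {}"
  proof
    assume "e = {}"
    then show False using e match_edge[OF mM, of e] match_edge[OF mM', of e] by auto
  qed
  then have ne: "e \<noteq> f" using ef by auto
  show ?thesis
  proof (cases "e \<in> M")
    case eM: True
    show ?thesis
    proof (cases "f \<in> M")
      case True then show ?thesis using im_nc[OF mM eM True ne] by simp
    next
      case False then have "f \<in> M'" using f by simp
      then show ?thesis using nc eM by simp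
    qed
  next
    case False
    then have eM': "e \<in> M'" using e by simp
    show ?thesis
    proof (cases "f \<in> M")
      case True then show ?thesis using nc[OF True eM'] crosses_sym by metis
    next
      case False then have "f \<in> M'" using f by simp
      then show ?thesis using im_nc[OF mM' eM' _ ne] by simp
    qed
  qed
qed

lemma noninter:
  assumes g: "{c,d} \<in> M \<union> M'" and cd: "c < d" and h: "{v,w} \<in> M \<union> M'" and dis: "{v,w} \<inter> {c,d} = {}"
  shows "(c < v \<and> v < d) = (c < w \<and> w < d)"
proof (rule ccontr)
  assume il: "(c < v \<and> v < d) \<noteq> (c < w \<and> w < d)"
  have "crosses P {c,d} {v,w}"
    using cross_interleave[OF cc cd E_sub(2)[OF g] E_sub(1)[OF h] E_sub(2)[OF h] _ _ il] dis by auto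
  moreover have "\<not> crosses P {c,d} {v,w}" using E_nc[OF g h] dis by (simp add: Int_commute)
  ultimately show False by simp
qed

lemma adj_iff: "(u,v) \<in> adj M M' \<longleftrightarrow> {u,v} \<in> M \<union> M'" unfolding adj_def by simp

lemma adj_mate: assumes "(u,v) \<in> adj M M'" shows "u < 2*k" "v = mate M u \<or> v = mate M' u"
proof -
  have e: "{u,v} \<in> M \<union> M'" using assms adj_iff by simp
  show "u < 2*k" using E_sub[OF e] by simp
  show "v = mate M u \<or> v = mate M' u"
  proof (cases "{u,v} \<in> M")
    case True then show ?thesis using mate_eq[OF mM] by metis
  next
    case False then have "{u,v} \<in> M'" using e by simp
    then show ?thesis using mate_eq[OF mM'] by metis
  qed
qed

lemma self_in: "a \<in> C a" unfolding comp_def by simp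

lemma comp_closed: assumes "v \<in> C a" "{v,w} \<in> M \<union> M'" shows "w \<in> C a"
proof -
  have "(v,w) \<in> adj M M'" using assms(2) adj_iff by simp
  then show ?thesis using assms(1) unfolding comp_def by (simp add: rtrancl_into_rtrancl)
qed

lemma comp_mate: assumes "v \<in> C a" "v < 2*k" shows "mate M v \<in> C a" "mate M' v \<in> C a"
  using comp_closed[OF assms(1)] mate(1)[OF mM assms(2)] mate(1)[OF mM' assms(2)] by auto

lemma comp_inv:
  assumes a: "a \<in> S" "a < 2*k"
    and stp: "\<And>v. v \<in> C a \<Longrightarrow> v \<in> S \<Longrightarrow> v < 2*k \<Longrightarrow> mate M v \<in> S \<and> mate M' v \<in> S"
  shows "C a \<subseteq> S"
proof
  fix v assume "v \<in> C a"
  then have "(a,v) \<in> (adj M M')\<^sup>*" unfolding comp_def by simp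
  then have "v \<in> S \<and> v < 2*k"
  proof (induction rule: rtrancl_induct)
    case base then show ?case using a by simp
  next
    case (step u v)
    have uC: "u \<in> C a" using step.hyps(1) unfolding comp_def by simp
    have "v = mate M u \<or> v = mate M' u" using adj_mate[OF step.hyps(2)] by simp
    moreover have "mate M u < 2*k" "mate M' u < 2*k" using mate(3)[OF mM] mate(3)[OF mM'] step.IH by auto
    ultimately show ?case using step.IH stp[OF uC] by auto
  qed
  then show "v \<in> S" by simp
qed

lemma comp_sub: assumes "a < 2*k" shows "C a \<subseteq> {..<2*k}"
  by (rule comp_inv) (use assms mate(3)[OF mM] mate(3)[OF mM'] in auto)

lemma adj_sym: "(u,v) \<in> adj M M' \<Longrightarrow> (v,u) \<in> adj M M'"
  unfolding adj_def by (simp add: insert_commute)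

lemma comp_eq: assumes "b \<in> C a" shows "C b = C a"
proof -
  have ab: "(a,b) \<in> (adj M M')\<^sup>*" using assms unfolding comp_def by simp
  have "(b,a) \<in> (adj M M')\<^sup>*"
    using ab by (induction rule: rtrancl_induct) (auto intro: converse_rtrancl_into_rtrancl adj_sym)
  then show ?thesis using ab unfolding comp_def by (auto intro: rtrancl_trans)
qed

lemma comp_meet: assumes "v \<in> C a" "v \<in> C b" shows "C a = C b"
  using comp_eq assms by metis


lemma consecM:
  assumes g: "{u,w} \<in> M" and uw: "u < w"
  shows "C u \<inter> {u<..<w} = {} \<or> C u \<subseteq> {u..w}"
proof -
  define In where "In = {u<..<w}"
  have gE: "{u,w} \<in> M \<union> M'" using g by simp
  have w2: "w < 2*k" using E_sub(2)[OF gE] .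
  have u2: "u < 2*k" using uw w2 by simp
  have In2: "v \<in> In \<Longrightarrow> v < 2*k" for v unfolding In_def using w2 by auto
  have mu: "mate M u = w" using mate_eq[OF mM g] .
  have mw: "mate M w = u" using mate_eq[OF mM, of w u] g by (simp add: insert_commute)
  have A: "mate M v \<in> In" if v: "v \<in> In" for v
  proof -
    define m where "m = mate M v"
    have vm: "{v,m} \<in> M" unfolding m_def using mate(1)[OF mM In2[OF v]] .
    have "m \<noteq> u"
    proof
      assume "m = u"
      then have "mate M u = v" using mate_eq[OF mM, of u v] vm by (simp add: insert_commute)
      then show False using mu v unfolding In_def by simp
    qed
    moreover have "m \<noteq> w"
    proof
      assume "m = w"
      then have "mate M w = v" using mate_eq[OF mM, of w v] vm by (simp add: insert_commute)
      then show False using mw v unfolding In_def by simp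
    qed
    ultimately have "{v,m} \<inter> {u,w} = {}" using v unfolding In_def by auto
    then have "(u < v \<and> v < w) = (u < m \<and> m < w)" using noninter[OF gE uw, of v m] vm by simp
    then show ?thesis using v unfolding In_def m_def by simp
  qed
  have B: "mate M' v \<in> In" if v: "v \<in> In" and nuw: "mate M' v \<notin> {u,w}" for v
  proof -
    define m where "m = mate M' v"
    have vm: "{v,m} \<in> M'" unfolding m_def using mate(1)[OF mM' In2[OF v]] .
    have "{v,m} \<inter> {u,w} = {}" using v nuw unfolding In_def m_def by auto
    then have "(u < v \<and> v < w) = (u < m \<and> m < w)" using noninter[OF gE uw, of v m] vm by simp
    then show ?thesis using v unfolding In_def m_def by simp
  qed
  define x1 where "x1 = mate M' u"
  define x2 where "x2 = mate M' w"
  have x1u: "{u, x1} \<in> M'" unfolding x1_def using mate(1)[OF mM' u2] .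
  have x2w: "{w, x2} \<in> M'" unfolding x2_def using mate(1)[OF mM' w2] .
  have x12: "x1 \<noteq> x2"
  proof
    assume "x1 = x2"
    then have "mate M' x1 = u" "mate M' x1 = w"
      using mate_eq[OF mM', of x1 u] mate_eq[OF mM', of x1 w] x1u x2w by (auto simp: insert_commute)
    then show False using uw by simp
  qed
  have x1n: "x1 \<noteq> u" "x1 \<noteq> w"
  proof -
    show "x1 \<noteq> u" using match_ne[OF mM' x1u] by simp
    show "x1 \<noteq> w" using x1u g disj by auto
  qed
  have x2n: "x2 \<noteq> w" "x2 \<noteq> u"
  proof -
    show "x2 \<noteq> w" using match_ne[OF mM' x2w] by simp
    show "x2 \<noteq> u" using x2w g disj by (auto simp: insert_commute)
  qed
  have finIn: "finite In" unfolding In_def by simp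
  have evIn: "even (card In)"
  proof (rule even_card_inv[OF finIn, of "mate M"])
    fix v assume v: "v \<in> In"
    show "mate M v \<in> In \<and> mate M v \<noteq> v \<and> mate M (mate M v) = v"
      using A[OF v] mate(2)[OF mM In2[OF v]] mate_mate[OF mM In2[OF v]] by simp
  qed
  define Aset where "Aset = {v \<in> In. mate M' v \<in> In}"
  have evA: "even (card Aset)"
  proof (rule even_card_inv[of Aset "mate M'"])
    show "finite Aset" using finIn unfolding Aset_def by simp
    fix v assume v: "v \<in> Aset"
    then have "v \<in> In" "mate M' v \<in> In" unfolding Aset_def by auto
    then show "mate M' v \<in> Aset \<and> mate M' v \<noteq> v \<and> mate M' (mate M' v) = v"
      unfolding Aset_def using mate(2)[OF mM'] mate_mate[OF mM'] In2 by auto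
  qed
  have Bset: "In - Aset = In \<inter> {x1, x2}"
  proof
    show "In - Aset \<subseteq> In \<inter> {x1, x2}"
    proof
      fix v assume v: "v \<in> In - Aset"
      then have vI: "v \<in> In" and "mate M' v \<notin> In" unfolding Aset_def by auto
      then have "mate M' v \<in> {u,w}" using B by blast
      then have "v = x1 \<or> v = x2" unfolding x1_def x2_def using mate_mate[OF mM' In2[OF vI]] by auto
      then show "v \<in> In \<inter> {x1, x2}" using vI by simp
    qed
    show "In \<inter> {x1, x2} \<subseteq> In - Aset"
    proof
      fix v assume v: "v \<in> In \<inter> {x1, x2}"
      have "mate M' x1 = u" "mate M' x2 = w" unfolding x1_def x2_def using mate_mate[OF mM'] u2 w2 by auto
      then have "mate M' v \<notin> In" using v unfolding In_def by auto
      then show "v \<in> In - Aset" using v unfolding Aset_def by auto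
    qed
  qed
  have AI: "Aset \<subseteq> In" unfolding Aset_def by auto
  have finA: "finite Aset" using finite_subset[OF AI finIn] .
  have "card (In - Aset) = card In - card Aset" using card_Diff_subset[OF finA AI] .
  moreover have "card Aset \<le> card In" using card_mono[OF finIn AI] .
  ultimately have "card In = card Aset + card (In - Aset)" by simp
  then have evB: "even (card (In \<inter> {x1, x2}))" using evIn evA Bset by simp
  have same: "x1 \<in> In \<longleftrightarrow> x2 \<in> In"
  proof (rule ccontr)
    assume "(x1 \<in> In) \<noteq> (x2 \<in> In)"
    then have "In \<inter> {x1, x2} = {x1} \<or> In \<inter> {x1, x2} = {x2}" by auto
    then show False using evB by auto
  qed
  show ?thesis
  proof (cases "x1 \<in> In")
    case False
    then have nx: "x1 \<notin> In" "x2 \<notin> In" using same by auto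
    have "C u \<subseteq> - In"
    proof (rule comp_inv)
      show "u \<in> - In" "u < 2*k" unfolding In_def using u2 by auto
      fix v assume v: "v \<in> C u" "v \<in> - In" "v < 2*k"
      have "mate M v \<notin> In"
      proof
        assume "mate M v \<in> In"
        then have "mate M (mate M v) \<in> In" by (rule A)
        then show False using mate_mate[OF mM v(3)] v(2) by simp
      qed
      moreover have "mate M' v \<notin> In"
      proof
        assume y: "mate M' v \<in> In"
        have "mate M' (mate M' v) = v" using mate_mate[OF mM' v(3)] .
        then have "mate M' (mate M' v) \<in> {u,w}" using B[OF y] v(2) by auto
        then have "mate M' v = x1 \<or> mate M' v = x2"
          unfolding x1_def x2_def using mate_mate[OF mM' In2[OF y]] by auto
        then show False using nx y by auto
      qed
      ultimately show "mate M v \<in> - In \<and> mate M' v \<in> - In" by simp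
    qed
    then show ?thesis unfolding In_def by auto
  next
    case True
    then have nx: "x1 \<in> In" "x2 \<in> In" using same by auto
    have "C u \<subseteq> {u..w}"
    proof (rule comp_inv)
      show "u \<in> {u..w}" "u < 2*k" using uw u2 by auto
      fix v assume v: "v \<in> C u" "v \<in> {u..w}" "v < 2*k"
      show "mate M v \<in> {u..w} \<and> mate M' v \<in> {u..w}"
      proof (cases "v = u \<or> v = w")
        case True
        then show ?thesis using mu mw nx uw unfolding x1_def x2_def In_def by auto
      next
        case False
        then have vI: "v \<in> In" using v unfolding In_def by auto
        have "mate M v \<in> In" using A[OF vI] .
        moreover have "mate M' v \<in> In \<or> mate M' v \<in> {u,w}" using B[OF vI] by blast
        ultimately show ?thesis using uw unfolding In_def by auto
      qed
    qed
    then show ?thesis by simp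
  qed
qed

lemma side:
  assumes g: "{c,d} \<in> M \<union> M'" and cd: "c < d" and a: "a < 2*k" and dis: "C a \<inter> {c,d} = {}"
  shows "C a \<subseteq> {c<..<d} \<or> C a \<inter> {c<..<d} = {}"
proof -
  define S where "S = {v. (c < v \<and> v < d) = (c < a \<and> a < d)}"
  have "C a \<subseteq> S"
  proof (rule comp_inv)
    show "a \<in> S" "a < 2*k" using a unfolding S_def by auto
    fix v assume v: "v \<in> C a" "v \<in> S" "v < 2*k"
    have "(c < v \<and> v < d) = (c < mate X v \<and> mate X v < d)" if X: "X = M \<or> X = M'" for X
    proof -
      have mX: "is_matching P k X" using X mM mM' by auto
      have e: "{v, mate X v} \<in> M \<union> M'" using mate(1)[OF mX v(3)] X by auto
      have "mate X v \<in> C a" using comp_closed[OF v(1) e] .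
      then have "{v, mate X v} \<inter> {c,d} = {}" using dis v(1) by auto
      then show ?thesis using noninter[OF g cd e] by simp
    qed
    then show "mate M v \<in> S \<and> mate M' v \<in> S" using v(2) unfolding S_def by blast
  qed
  then have h: "\<And>v. v \<in> C a \<Longrightarrow> (c < v \<and> v < d) = (c < a \<and> a < d)" unfolding S_def by blast
  show ?thesis
  proof (cases "c < a \<and> a < d")
    case True then have "C a \<subseteq> {c<..<d}" using h by auto
    then show ?thesis by simp
  next
    case False then have "C a \<inter> {c<..<d} = {}" using h by auto
    then show ?thesis by simp
  qed
qed

lemma consec:
  assumes e: "{x,y} \<in> M \<union> M'" and xy: "x < y"
  shows "C x \<inter> {x<..<y} = {} \<or> C x \<subseteq> {x..y}"
proof (cases "{x,y} \<in> M")
  case True then show ?thesis using consecM xy by simp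
next
  case False
  then have "{x,y} \<in> M'" using e by simp
  then show ?thesis using dcset.consecM[OF swap _ xy] comp_swap by metis
qed

end


lemma orient_aff: "u + v = 1 \<Longrightarrow> orient A B (u *\<^sub>R x + v *\<^sub>R y) = u * orient A B x + v * orient A B y"
  unfolding orient_def by (simp add: algebra_simps) (metis (no_types, lifting) add_diff_cancel_left' diff_add_cancel mult.commute ring_class.ring_distribs(1) mult_1)

lemma convex_pos: "convex {x. 0 < orient A B x}"
  unfolding convex_def
proof (intro ballI allI impI)
  fix x y and u v :: real
  assume x: "x \<in> {x. 0 < orient A B x}" and y: "y \<in> {x. 0 < orient A B x}" and uv: "0 \<le> u" "0 \<le> v" "u + v = 1"
  have e: "orient A B (u *\<^sub>R x + v *\<^sub>R y) = u * orient A B x + v * orient A B y" using orient_aff uv(3) .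
  have o: "0 < orient A B x" "0 < orient A B y" using x y by auto
  show "u *\<^sub>R x + v *\<^sub>R y \<in> {x. 0 < orient A B x}"
  proof (cases "u = 0")
    case True then have "v = 1" using uv by simp
    then show ?thesis using e o True by simp
  next
    case False then have "0 < u" using uv by simp
    then have "0 < u * orient A B x" "0 \<le> v * orient A B y" using o uv by auto
    then show ?thesis using e by simp
  qed
qed

lemma convex_nonpos: "convex {x. orient A B x \<le> 0}"
  unfolding convex_def
proof (intro ballI allI impI)
  fix x y and u v :: real
  assume x: "x \<in> {x. orient A B x \<le> 0}" and y: "y \<in> {x. orient A B x \<le> 0}" and uv: "0 \<le> u" "0 \<le> v" "u + v = 1"
  have e: "orient A B (u *\<^sub>R x + v *\<^sub>R y) = u * orient A B x + v * orient A B y" using orient_aff uv(3) .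
  have "u * orient A B x \<le> 0" "v * orient A B y \<le> 0" using x y uv by (auto simp: mult_nonneg_nonpos)
  then show "u *\<^sub>R x + v *\<^sub>R y \<in> {x. orient A B x \<le> 0}" using e by simp
qed

lemma sep_hull:
  assumes "\<forall>x\<in>S. 0 < orient A B x" "\<forall>x\<in>T. orient A B x \<le> 0"
  shows "convex hull S \<inter> convex hull T = {}"
proof -
  have "convex hull S \<subseteq> {x. 0 < orient A B x}" using assms(1) by (intro hull_minimal convex_pos) auto
  moreover have "convex hull T \<subseteq> {x. orient A B x \<le> 0}" using assms(2) by (intro hull_minimal convex_nonpos) auto
  ultimately show ?thesis by force
qed

lemma gap:
  assumes s: "sorted_wrt (<) (ys::nat list)" and v: "ys!0 < v" "v < ys!(length ys - 1)" "v \<notin> set ys"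
  shows "\<exists>t. Suc t < length ys \<and> ys!t < v \<and> v < ys!(Suc t)"
proof -
  define T where "T = {t. t < length ys \<and> ys!t < v}"
  have L: "0 < length ys"
  proof (rule ccontr)
    assume "\<not> 0 < length ys" then have "ys = []" by simp
    then show False using v by simp
  qed
  have finT: "finite T" unfolding T_def by simp
  have T0: "0 \<in> T" unfolding T_def using v L by simp
  define t where "t = Max T"
  have tT: "t \<in> T" unfolding t_def using Max_in[OF finT] T0 by blast
  then have t: "t < length ys" "ys!t < v" unfolding T_def by auto
  have "t \<noteq> length ys - 1" using t v by auto
  then have st: "Suc t < length ys" using t by simp
  have "Suc t \<notin> T" unfolding t_def using Max_ge[OF finT] by (metis Suc_n_not_le_n)
  then have "\<not> ys!(Suc t) < v" unfolding T_def using st by simp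
  moreover have "ys!(Suc t) \<noteq> v" using v(3) nth_mem[OF st] by auto
  ultimately show ?thesis using st t by (intro exI[of _ t]) simp
qed

locale dccomp = dcset +
  fixes a assumes a2: "a < 2*k"
begin

abbreviation "Cc \<equiv> C a"
abbreviation "cs \<equiv> sorted_list_of_set Cc"
abbreviation "n \<equiv> length cs"
abbreviation "NC \<equiv> {e \<in> M. e \<subseteq> Cc}"
abbreviation "MC' \<equiv> {e \<in> M'. e \<subseteq> Cc}"

lemma Csub: "Cc \<subseteq> {..<2*k}" using comp_sub[OF a2] .
lemma finC: "finite Cc" using finite_subset[OF Csub] by simp
lemma setcs: "set cs = Cc" using finC by simp
lemma sorted_cs: "sorted_wrt (<) cs" by (simp add: strict_sorted_list_of_set)
lemma n_card: "n = card Cc" by simp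
lemma cs_in: "i < n \<Longrightarrow> cs!i \<in> Cc" using nth_mem[of i cs] setcs by simp
lemma cs_idx: "v \<in> Cc \<Longrightarrow> \<exists>i<n. cs!i = v" using setcs in_set_conv_nth[of v cs] by simp
lemma cs_inj: "i < n \<Longrightarrow> j < n \<Longrightarrow> cs!i = cs!j \<longleftrightarrow> i = j" using ss_eq_iff[OF sorted_cs] by blast
lemma C2: "v \<in> Cc \<Longrightarrow> v < 2*k" using Csub by auto

lemma UNC: "\<Union>NC = Cc"
proof
  show "\<Union>NC \<subseteq> Cc" by blast
  show "Cc \<subseteq> \<Union>NC"
  proof
    fix v assume v: "v \<in> Cc"
    have "{v, mate M v} \<in> M" using mate(1)[OF mM C2[OF v]] .
    moreover have "{v, mate M v} \<subseteq> Cc" using comp_mate(1)[OF v C2[OF v]] v by simp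
    ultimately show "v \<in> \<Union>NC" by blast
  qed
qed

lemma UMC': "\<Union>MC' = Cc"
proof
  show "\<Union>MC' \<subseteq> Cc" by blast
  show "Cc \<subseteq> \<Union>MC'"
  proof
    fix v assume v: "v \<in> Cc"
    have "{v, mate M' v} \<in> M'" using mate(1)[OF mM' C2[OF v]] .
    moreover have "{v, mate M' v} \<subseteq> Cc" using comp_mate(2)[OF v C2[OF v]] v by simp
    ultimately show "v \<in> \<Union>MC'" by blast
  qed
qed

lemma n_NC: "n = 2 * card NC" using match_card_Union[OF mM, of NC] UNC by simp
lemma n_MC': "n = 2 * card MC'" using match_card_Union[OF mM', of MC'] UMC' by simp
lemma n_even: "even n" using n_NC by simp

lemma n3: "3 \<le> n"
proof -
  have aC: "a \<in> Cc" using self_in .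
  have m1: "mate M a \<in> Cc" "mate M' a \<in> Cc" using comp_mate[OF aC a2] by auto
  have ne1: "mate M a \<noteq> a" "mate M' a \<noteq> a" using mate(2)[OF mM a2] mate(2)[OF mM' a2] by auto
  have ne2: "mate M a \<noteq> mate M' a"
  proof
    assume h: "mate M a = mate M' a"
    have "{a, mate M a} \<in> M" "{a, mate M' a} \<in> M'" using mate(1)[OF mM a2] mate(1)[OF mM' a2] by auto
    then show False using h disj by auto
  qed
  have "card {a, mate M a, mate M' a} = 3" using ne1 ne2 by auto
  moreover have "card {a, mate M a, mate M' a} \<le> card Cc" using aC m1 finC by (intro card_mono) auto
  ultimately show ?thesis by simp
qed

lemma n4: "4 \<le> n" using n3 n_even by presburger
lemma n0: "0 < n" using n3 by simp

lemma IL_lt: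
  assumes e: "{x,y} \<in> M \<union> M'" and xC: "x \<in> Cc" and xy: "x < y"
    and p: "p < n" "cs!p = x" and q: "q < n" "cs!q = y"
  shows "q = nxt n p \<or> p = nxt n q"
proof -
  have Cx: "C x = Cc" using comp_eq[OF xC] .
  have pq: "p < q" using ss_less_iff[OF sorted_cs p(1) q(1)] p q xy by simp
  from consec[OF e xy] Cx have "Cc \<inter> {x<..<y} = {} \<or> Cc \<subseteq> {x..y}" by simp
  then show ?thesis
  proof
    assume h: "Cc \<inter> {x<..<y} = {}"
    have "q = Suc p"
    proof (rule ccontr)
      assume "q \<noteq> Suc p"
      then have sp: "Suc p < q" using pq by simp
      then have "cs!p < cs!Suc p" "cs!Suc p < cs!q" using ss_less[OF sorted_cs] q(1) by auto
      moreover have "cs!Suc p \<in> Cc" using cs_in sp q(1) by simp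
      ultimately show False using h p q by auto
    qed
    then show ?thesis using nxt_small[of p n] q(1) by simp
  next
    assume h: "Cc \<subseteq> {x..y}"
    have p0: "p = 0"
    proof (rule ccontr)
      assume "p \<noteq> 0"
      then have "cs!0 < cs!p" using ss_less[OF sorted_cs _ p(1), of 0] by simp
      moreover have "cs!0 \<in> Cc" using cs_in n0 by simp
      ultimately show False using h p by auto
    qed
    have qn: "q = n - 1"
    proof (rule ccontr)
      assume "q \<noteq> n - 1"
      then have "q < n - 1" using q(1) by simp
      then have "cs!q < cs!(n-1)" using ss_less[OF sorted_cs, of q "n-1"] n0 by simp
      moreover have "cs!(n-1) \<in> Cc" using cs_in n0 by simp
      ultimately show False using h q by auto
    qed
    have "nxt n q = 0" using qn nxt_last[OF n0] by simp
    then show ?thesis using p0 by simp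
  qed
qed

lemma IL:
  assumes e: "{x,y} \<in> M \<union> M'" and xC: "x \<in> Cc"
    and p: "p < n" "cs!p = x" and q: "q < n" "cs!q = y"
  shows "q = nxt n p \<or> p = nxt n q"
proof -
  have xy: "x \<noteq> y" using E_sub(3)[OF e] .
  show ?thesis
  proof (cases "x < y")
    case True show ?thesis using IL_lt[OF e xC True p q] by simp
  next
    case False
    then have yx: "y < x" using xy by simp
    have e': "{y,x} \<in> M \<union> M'" using e by (simp add: insert_commute)
    have yC: "y \<in> Cc" using comp_closed[OF xC e] .
    show ?thesis using IL_lt[OF e' yC yx q p] by blast
  qed
qed

definition Fw :: "nat set set \<Rightarrow> nat \<Rightarrow> bool" where "Fw X t \<longleftrightarrow> {cs!t, cs!(nxt n t)} \<in> X"

lemma N1: assumes t: "t < n" shows "Fw M t \<or> Fw M' t"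
proof -
  define v where "v = cs!t"
  have vC: "v \<in> Cc" unfolding v_def using cs_in[OF t] .
  have v2: "v < 2*k" using C2[OF vC] .
  define m1 where "m1 = mate M v"
  define m2 where "m2 = mate M' v"
  have e1: "{v,m1} \<in> M" "{v,m2} \<in> M'" unfolding m1_def m2_def using mate(1)[OF mM v2] mate(1)[OF mM' v2] by auto
  have m12: "m1 \<noteq> m2" using e1 disj by auto
  have m1C: "m1 \<in> Cc" "m2 \<in> Cc" using comp_closed[OF vC] e1 by auto
  obtain q1 where q1: "q1 < n" "cs!q1 = m1" using cs_idx[OF m1C(1)] by blast
  obtain q2 where q2: "q2 < n" "cs!q2 = m2" using cs_idx[OF m1C(2)] by blast
  have i1: "q1 = nxt n t \<or> t = nxt n q1" using IL[of v m1 t q1] e1 vC t q1 unfolding v_def by simp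
  have i2: "q2 = nxt n t \<or> t = nxt n q2" using IL[of v m2 t q2] e1 vC t q2 unfolding v_def by simp
  show ?thesis
  proof (cases "q1 = nxt n t")
    case True then show ?thesis using e1 q1 unfolding Fw_def v_def by simp
  next
    case False
    show ?thesis
    proof (cases "q2 = nxt n t")
      case True then show ?thesis using e1 q2 unfolding Fw_def v_def by simp
    next
      case False2: False
      then have "nxt n q1 = nxt n q2" using i1 i2 False by simp
      then have "q1 = q2" using nxt_inj q1 q2 by blast
      then show ?thesis using m12 q1 q2 by simp
    qed
  qed
qed

lemma N2: assumes X: "is_matching P k X" and t: "t < n" and f1: "Fw X t" and f2: "Fw X (nxt n t)"
  shows False
proof -
  define t1 where "t1 = nxt n t"
  define t2 where "t2 = nxt n t1"
  have t12: "t1 < n" "t2 < n" unfolding t1_def t2_def using nxt_lt[OF n0] by auto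
  have e1: "{cs!t1, cs!t} \<in> X" using f1 unfolding Fw_def t1_def by (simp add: insert_commute)
  have e2: "{cs!t1, cs!t2} \<in> X" using f2 unfolding Fw_def t1_def t2_def by simp
  have "cs!t = cs!t2" using mate_eq[OF X e1] mate_eq[OF X e2] by simp
  then have "t = t2" using cs_inj t t12 by blast
  then show False using nxt_nxt_ne[OF n3 t] unfolding t1_def t2_def by simp
qed

lemma N3: assumes t: "t < n" shows "Fw M (nxt n t) \<longleftrightarrow> \<not> Fw M t"
proof
  assume "Fw M (nxt n t)"
  then show "\<not> Fw M t" using N2[OF mM t] by blast
next
  assume "\<not> Fw M t"
  then have "Fw M' t" using N1[OF t] by simp
  then have "\<not> Fw M' (nxt n t)" using N2[OF mM' t] by blast
  then show "Fw M (nxt n t)" using N1[OF nxt_lt[OF n0, of t]] by simp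
qed

lemma parity: "t < n \<Longrightarrow> Fw M t \<longleftrightarrow> (Fw M 0 \<longleftrightarrow> even t)"
proof (induction t)
  case 0 then show ?case by simp
next
  case (Suc t)
  have "nxt n t = Suc t" using nxt_small Suc.prems by simp
  then have "Fw M (Suc t) \<longleftrightarrow> \<not> Fw M t" using N3[of t] Suc.prems by simp
  then show ?case using Suc by simp
qed

lemma consec_edge: "t < n \<Longrightarrow> {cs!t, cs!(nxt n t)} \<in> M \<union> M'"
  using N1 unfolding Fw_def by blast

lemma Qlab_C: "Qlab NC r j = cs!((j + r) mod n)" using Qlab_eq[of NC r j] UNC by simp

definition r0 where "r0 = (if Fw M 0 then 0 else 1::nat)"

lemma NC_pairs: "NC = pairs NC r0 0"
proof
  have cN: "card NC = n div 2" using n_NC by simp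
  show "pairs NC r0 0 \<subseteq> NC"
  proof
    fix e assume "e \<in> pairs NC r0 0"
    then obtain i where i: "i < card NC" and e: "e = {Qlab NC r0 (2*i + 0), Qlab NC r0 (2*i + 0 + 1)}"
      unfolding pairs_def by blast
    define t where "t = 2*i + r0"
    have r01: "r0 \<le> 1" unfolding r0_def by simp
    have tn: "t < n" using i cN n_even r01 unfolding t_def by presburger
    have q1: "Qlab NC r0 (2*i + 0) = cs!t" unfolding Qlab_C t_def using tn t_def by simp
    have q2: "Qlab NC r0 (2*i + 0 + 1) = cs!(nxt n t)"
      unfolding Qlab_C t_def nxt_def by (simp add: mod_Suc_eq)
    have "Fw M t"
    proof (cases "Fw M 0")
      case True then show ?thesis using parity[OF tn] unfolding t_def r0_def by simp
    next
      case False then show ?thesis using parity[OF tn] unfolding t_def r0_def by simp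
    qed
    then have eM: "e \<in> M" using e q1 q2 unfolding Fw_def by simp
    have "e \<subseteq> Cc" using e q1 q2 cs_in[OF tn] cs_in[OF nxt_lt[OF n0, of t]] by simp
    then show "e \<in> NC" using eM by simp
  qed
  show "NC \<subseteq> pairs NC r0 0"
  proof
    fix e assume eN: "e \<in> NC"
    then have eM: "e \<in> M" and eC: "e \<subseteq> Cc" by auto
    obtain x y where xy: "x < y" "e = {x,y}" using match_edge[OF mM eM] by blast
    have xC: "x \<in> Cc" using eC xy by simp
    have ee: "{x,y} \<in> M \<union> M'" using eM xy by simp
    have yC: "y \<in> Cc" using eC xy by simp
    obtain p where p: "p < n" "cs!p = x" using cs_idx[OF xC] by blast
    obtain q where q: "q < n" "cs!q = y" using cs_idx[OF yC] by blast
    obtain s where s: "s < n" "Fw M s" "e = {cs!s, cs!(nxt n s)}"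
    proof (cases "q = nxt n p")
      case True
      have "e = {cs!p, cs!(nxt n p)}" using True p q xy by simp
      moreover have "Fw M p" unfolding Fw_def using calculation eM by simp
      ultimately show ?thesis using that[of p] p by blast
    next
      case False
      then have "p = nxt n q" using IL[OF ee xC p q] by simp
      then have "e = {cs!q, cs!(nxt n q)}" using p q xy by (simp add: insert_commute)
      moreover have "Fw M q" unfolding Fw_def using calculation eM by simp
      ultimately show ?thesis using that[of q] q by blast
    qed
    define i where "i = s div 2"
    have si: "2*i + r0 = s"
    proof (cases "Fw M 0")
      case True then have "even s" using parity[OF s(1)] s(2) by simp
      then show ?thesis unfolding i_def r0_def using True by simp
    next
      case False then have "odd s" using parity[OF s(1)] s(2) by simp
      then have "2 * (s div 2) + 1 = s" by presburger
      then show ?thesis unfolding i_def r0_def using False by simp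
    qed
    have "s div 2 < n div 2" using s(1) n_even by (auto elim!: evenE)
    then have iN: "i < card NC" using cN unfolding i_def by simp
    have q1: "Qlab NC r0 (2*i + 0) = cs!s" unfolding Qlab_C using si s(1) by simp
    have ss: "2*i + 0 + 1 + r0 = Suc s" using si by simp
    have q2: "Qlab NC r0 (2*i + 0 + 1) = cs!(nxt n s)" unfolding Qlab_C nxt_def ss ..
    show "e \<in> pairs NC r0 0" unfolding pairs_def using iN q1 q2 s(3)
      by (intro CollectI exI[of _ i]) simp
  qed
qed


lemma hull_avoid: assumes e: "e \<in> M" "e \<notin> NC" shows "convex hull (P ` Cc) \<inter> seg P e = {}"
proof -
  obtain c d where cd: "c < d" "d < 2*k" "e = {c,d}" using match_edge[OF mM e(1)] by blast
  have dis: "Cc \<inter> {c,d} = {}"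
  proof (rule ccontr)
    assume "Cc \<inter> {c,d} \<noteq> {}"
    then obtain v where v: "v \<in> Cc" "v \<in> e" using cd by blast
    have "e = {v, mate M v}" using edge_mate[OF mM e(1) v(2)] .
    then have "e \<subseteq> Cc" using v(1) comp_mate(1)[OF v(1) C2[OF v(1)]] by simp
    then show False using e by simp
  qed
  have g: "{c,d} \<in> M \<union> M'" using e cd by simp
  have segE: "seg P e = convex hull (P ` {c,d})" unfolding seg_def cd by simp
  have z: "\<And>A B. x \<in> P ` {c,d} \<Longrightarrow> A = P c \<and> B = P d \<or> A = P d \<and> B = P c \<Longrightarrow> orient A B x = 0" for x
    using orient_self1 orient_self2 by auto
  from side[OF g cd(1) a2 dis] show ?thesis
  proof
    assume h: "Cc \<subseteq> {c<..<d}"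
    have "\<forall>x\<in>P ` Cc. 0 < orient (P c) (P d) x"
    proof
      fix x assume "x \<in> P ` Cc"
      then obtain v where v: "v \<in> Cc" "x = P v" by blast
      show "0 < orient (P c) (P d) x" using orient_sign(1)[OF cc cd(1,2) C2[OF v(1)]] h v by auto
    qed
    moreover have "\<forall>x\<in>P ` {c,d}. orient (P c) (P d) x \<le> 0" using z by fastforce
    ultimately show ?thesis unfolding segE by (rule sep_hull)
  next
    assume h: "Cc \<inter> {c<..<d} = {}"
    have "\<forall>x\<in>P ` Cc. 0 < orient (P d) (P c) x"
    proof
      fix x assume "x \<in> P ` Cc"
      then obtain v where v: "v \<in> Cc" "x = P v" by blast
      have "v \<notin> {c,d}" using dis v by auto
      then have "v < c \<or> d < v" using h v by auto
      then have "orient (P c) (P d) x < 0" using orient_sign(2,3)[OF cc cd(1,2) C2[OF v(1)]] v by auto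
      then show "0 < orient (P d) (P c) x" using orient_swap12[of "P d" "P c" x] by simp
    qed
    moreover have "\<forall>x\<in>P ` {c,d}. orient (P d) (P c) x \<le> 0" using z by fastforce
    ultimately show ?thesis unfolding segE by (rule sep_hull)
  qed
qed

lemma flippable_NC: "flippable P M NC"
  unfolding flippable_def
proof (intro conjI)
  show "NC \<subseteq> M" by blast
  show "2 \<le> card NC" using n_NC n4 by simp
  show "\<exists>r. NC = pairs NC r 0" using NC_pairs by blast
  show "\<forall>e\<in>M - NC. convex hull (P ` \<Union>NC) \<inter> seg P e = {}" using hull_avoid UNC by simp
qed

lemma fsNC: "flipset P k M NC" using mM flippable_NC by (simp add: flipset_def)

lemma consec_form: assumes X: "X = M \<or> X = M'" and f: "f \<in> X" "f \<subseteq> Cc"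
  shows "\<exists>s<n. f = {cs!s, cs!(nxt n s)}"
proof -
  have mX: "is_matching P k X" using X mM mM' by auto
  obtain x y where xy: "x < y" "f = {x,y}" using match_edge[OF mX f(1)] by blast
  have xC: "x \<in> Cc" "y \<in> Cc" using f xy by auto
  have ee: "{x,y} \<in> M \<union> M'" using f X xy by auto
  obtain p where p: "p < n" "cs!p = x" using cs_idx[OF xC(1)] by blast
  obtain q where q: "q < n" "cs!q = y" using cs_idx[OF xC(2)] by blast
  show ?thesis
  proof (cases "q = nxt n p")
    case True then show ?thesis using p q xy by auto
  next
    case False
    then have "p = nxt n q" using IL[OF ee xC(1) p q] by simp
    then show ?thesis using p q xy by (auto simp: insert_commute)
  qed
qed

lemma flip_NC: "flip NC = MC'"
proof -
  obtain R where R0: "NC = pairs NC R 0" and R1: "flip NC = pairs NC R 1"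
    using flipset.rr[OF fsNC] flipset.flip_eq[OF fsNC] by blast
  have sub: "pairs NC R 1 \<subseteq> MC'"
  proof
    fix f assume "f \<in> pairs NC R 1"
    then obtain i where i: "i < card NC" and f: "f = {Qlab NC R (2*i + 1), Qlab NC R (2*i + 1 + 1)}"
      unfolding pairs_def by blast
    have "{Qlab NC R (2*i + 0), Qlab NC R (2*i + 0 + 1)} \<in> pairs NC R 0"
      unfolding pairs_def using i by (intro CollectI exI[of _ i]) simp
    then have e0: "{Qlab NC R (2*i + 0), Qlab NC R (2*i + 0 + 1)} \<in> M" using R0 by blast
    define t0 where "t0 = (2*i + R) mod n"
    have t0n: "t0 < n" unfolding t0_def using n0 by simp
    have q0: "Qlab NC R (2*i + 0) = cs!t0" unfolding Qlab_C t0_def by simp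
    have q1: "Qlab NC R (2*i + 1) = cs!(nxt n t0)" unfolding Qlab_C t0_def nxt_mod by simp
    have q2: "Qlab NC R (2*i + 1 + 1) = cs!(nxt n (nxt n t0))" unfolding Qlab_C t0_def nxt_mod by simp
    have "Fw M t0" using e0 q0 q1 unfolding Fw_def by simp
    then have "\<not> Fw M (nxt n t0)" using N3[OF t0n] by simp
    then have "Fw M' (nxt n t0)" using N1[OF nxt_lt[OF n0, of t0]] by simp
    then have fM': "f \<in> M'" using f q1 q2 unfolding Fw_def by simp
    have "f \<subseteq> Cc" using f q1 q2 cs_in nxt_lt[OF n0] by simp
    then show "f \<in> MC'" using fM' by simp
  qed
  have "MC' \<subseteq> flip NC"
  proof
    fix f assume f: "f \<in> MC'"
    then obtain s where s: "s < n" "f = {cs!s, cs!(nxt n s)}" using consec_form[of M' f] by auto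
    have "f \<in> NC \<union> flip NC" using flipset.consec_in[OF fsNC, of s] UNC s by simp
    moreover have "f \<notin> NC" using f disj by auto
    ultimately show "f \<in> flip NC" by blast
  qed
  then show ?thesis using sub R1 by simp
qed

lemma Cc_between: assumes "x \<in> Cc" shows "cs!0 \<le> x" "x \<le> cs!(n-1)"
proof -
  obtain i where i: "i < n" "cs!i = x" using cs_idx[OF assms] by blast
  show "cs!0 \<le> x" using ss_less_iff[OF sorted_cs n0 i(1)] i by (cases "i = 0") auto
  have nn: "n - 1 < n" using n0 by simp
  show "x \<le> cs!(n-1)" using ss_less_iff[OF sorted_cs i(1) nn] i by (cases "i = n - 1") auto
qed

lemma Cc_gap: assumes x: "x \<in> Cc" and t: "Suc t < n" shows "x \<le> cs!t \<or> cs!(Suc t) \<le> x"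
proof -
  obtain i where i: "i < n" "cs!i = x" using cs_idx[OF x] by blast
  have tn: "t < n" using t by simp
  show ?thesis
  proof (cases "i \<le> t")
    case True then show ?thesis using ss_less_iff[OF sorted_cs i(1) tn] i by (cases "i = t") auto
  next
    case False then show ?thesis using ss_less_iff[OF sorted_cs t i(1)] i by (cases "i = Suc t") auto
  qed
qed

lemma comp_sep:
  assumes b: "b < 2*k" and dis: "C b \<inter> Cc = {}"
  shows "convex hull (P ` Cc) \<inter> convex hull (P ` C b) = {}"
proof -
  have bC: "b \<in> C b" using self_in .
  have bn: "b \<notin> Cc" using dis bC by blast
  have C2b: "x \<in> C b \<Longrightarrow> x < 2*k" for x using comp_sub[OF b] by auto
  define y0 where "y0 = cs!0"
  define yL where "yL = cs!(n-1)"
  have yC: "y0 \<in> Cc" "yL \<in> Cc" unfolding y0_def yL_def using cs_in n0 by auto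
  have y0L: "y0 < yL" unfolding y0_def yL_def using ss_less[OF sorted_cs, of 0 "n-1"] n4 by simp
  have yL2: "yL < 2*k" using C2[OF yC(2)] .
  show ?thesis
  proof (cases "b < y0 \<or> yL < b")
    case True
    have "nxt n (n-1) = 0" using nxt_last[OF n0] .
    then have "{yL, y0} \<in> M \<union> M'" using consec_edge[of "n-1"] n0 unfolding y0_def yL_def by simp
    then have g: "{y0, yL} \<in> M \<union> M'" by (simp add: insert_commute)
    have dis2: "C b \<inter> {y0, yL} = {}" using yC dis by blast
    have "\<not> (C b \<subseteq> {y0<..<yL})" using bC True by auto
    then have out: "C b \<inter> {y0<..<yL} = {}" using side[OF g y0L b dis2] by blast
    have "\<forall>x\<in>P ` C b. 0 < orient (P yL) (P y0) x"
    proof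
      fix x assume "x \<in> P ` C b"
      then obtain v where v: "v \<in> C b" "x = P v" by blast
      have "v \<notin> {y0, yL}" using dis2 v by auto
      then have "v < y0 \<or> yL < v" using out v by auto
      then have "orient (P y0) (P yL) x < 0" using orient_sign(2,3)[OF cc y0L yL2 C2b[OF v(1)]] v by auto
      then show "0 < orient (P yL) (P y0) x" using orient_swap12[of "P yL" "P y0" x] by simp
    qed
    moreover have "\<forall>x\<in>P ` Cc. orient (P yL) (P y0) x \<le> 0"
    proof
      fix x assume "x \<in> P ` Cc"
      then obtain v where v: "v \<in> Cc" "x = P v" by blast
      have "y0 \<le> v" "v \<le> yL" using Cc_between[OF v(1)] unfolding y0_def yL_def by auto
      then have "0 \<le> orient (P y0) (P yL) x"
        using orient_sign(1)[OF cc y0L yL2 C2[OF v(1)]] v orient_self1 orient_self2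
        by (cases "v = y0"; cases "v = yL") (auto simp: less_le)
      then show "orient (P yL) (P y0) x \<le> 0" using orient_swap12[of "P yL" "P y0" x] by simp
    qed
    ultimately show ?thesis using sep_hull by blast
  next
    case False
    moreover have "b \<noteq> y0" "b \<noteq> yL" using bn yC by auto
    ultimately have "y0 < b" "b < yL" by auto
    then obtain t where t: "Suc t < n" "cs!t < b" "b < cs!(Suc t)"
      using gap[OF sorted_cs, of b] bn setcs unfolding y0_def yL_def by auto
    define c where "c = cs!t"
    define d where "d = cs!(Suc t)"
    have cd: "c < d" using t unfolding c_def d_def by simp
    have dC: "c \<in> Cc" "d \<in> Cc" unfolding c_def d_def using cs_in t by auto
    have d2: "d < 2*k" using C2[OF dC(2)] .
    have "nxt n t = Suc t" using nxt_small[OF t(1)] .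
    then have g: "{c, d} \<in> M \<union> M'" using consec_edge[of t] t unfolding c_def d_def by simp
    have dis2: "C b \<inter> {c, d} = {}" using dC dis by blast
    have "C b \<inter> {c<..<d} \<noteq> {}" using bC t unfolding c_def d_def by auto
    then have inn: "C b \<subseteq> {c<..<d}" using side[OF g cd b dis2] by blast
    have "\<forall>x\<in>P ` C b. 0 < orient (P c) (P d) x"
    proof
      fix x assume "x \<in> P ` C b"
      then obtain v where v: "v \<in> C b" "x = P v" by blast
      show "0 < orient (P c) (P d) x" using orient_sign(1)[OF cc cd d2 C2b[OF v(1)]] inn v by auto
    qed
    moreover have "\<forall>x\<in>P ` Cc. orient (P c) (P d) x \<le> 0"
    proof
      fix x assume "x \<in> P ` Cc"
      then obtain v where v: "v \<in> Cc" "x = P v" by blast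
      have "v \<le> c \<or> d \<le> v" using Cc_gap[OF v(1) t(1)] unfolding c_def d_def .
      then show "orient (P c) (P d) x \<le> 0"
        using orient_sign(2,3)[OF cc cd d2 C2[OF v(1)]] v orient_self1 orient_self2
        by (cases "v = c"; cases "v = d") (auto simp: le_less)
    qed
    ultimately show ?thesis using sep_hull by (metis Int_commute)
  qed
qed

end


lemma exists_partition:
  assumes cc: "convex_clockwise P k" and mM: "is_matching P k M" and mM': "is_matching P k M'"
    and dc: "disjoint_compatible P M M'"
  shows "\<exists>Pt. good_partition P M M' Pt"
proof -
  have dj: "M \<inter> M' = {}" and ncr: "\<And>e f. e \<in> M \<Longrightarrow> f \<in> M' \<Longrightarrow> \<not> crosses P e f"
    using dc unfolding disjoint_compatible_def by auto
  have D: "dcset P k M M'" unfolding dcset_def using cc mM mM' dj ncr by blast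
  interpret D: dcset P k M M' using D .
  have DC: "a < 2*k \<Longrightarrow> dccomp P k M M' a" for a
    unfolding dccomp_def dccomp_axioms_def using D by simp
  define NCf where "NCf a = {e \<in> M. e \<subseteq> comp M M' a}" for a
  define Pt where "Pt = NCf ` {..<2*k}"
  have UN: "\<Union>(NCf a) = comp M M' a" if "a < 2*k" for a
    using dccomp.UNC[OF DC[OF that]] unfolding NCf_def by simp
  have edge_in: "e \<in> NCf x" if e: "e \<in> M" "e = {x,y}" for e x y
  proof -
    have xC: "x \<in> comp M M' x" using D.self_in .
    have "y \<in> comp M M' x" using D.comp_closed[OF xC, of y] e by simp
    then show ?thesis using xC e unfolding NCf_def by simp
  qed
  have eqN: "NCf a = NCf b" if "v \<in> comp M M' a" "v \<in> comp M M' b" for a b v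
    using D.comp_meet[OF that] unfolding NCf_def by simp
  have g1: "\<Union>Pt = M"
  proof
    show "\<Union>Pt \<subseteq> M" unfolding Pt_def NCf_def by blast
    show "M \<subseteq> \<Union>Pt"
    proof
      fix e assume e: "e \<in> M"
      obtain x y where xy: "x < y" "y < 2*k" "e = {x,y}" using match_edge[OF mM e] by blast
      have "e \<in> NCf x" using edge_in[OF e xy(3)] .
      moreover have "x < 2*k" using xy by simp
      ultimately show "e \<in> \<Union>Pt" unfolding Pt_def by blast
    qed
  qed
  have g2: "{} \<notin> Pt"
  proof
    assume "{} \<in> Pt"
    then obtain a where a: "a < 2*k" "NCf a = {}" unfolding Pt_def by auto
    have "{a, mate M a} \<in> NCf a" using edge_in[OF mate(1)[OF mM a(1)]] by simp
    then show False using a by simp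
  qed
  have g3: "\<forall>N1\<in>Pt. \<forall>N2\<in>Pt. N1 \<noteq> N2 \<longrightarrow> N1 \<inter> N2 = {}"
  proof (intro ballI impI)
    fix N1 N2 assume N: "N1 \<in> Pt" "N2 \<in> Pt" "N1 \<noteq> N2"
    obtain a where a: "a < 2*k" "N1 = NCf a" using N(1) unfolding Pt_def by auto
    obtain b where b: "b < 2*k" "N2 = NCf b" using N(2) unfolding Pt_def by auto
    show "N1 \<inter> N2 = {}"
    proof (rule ccontr)
      assume "N1 \<inter> N2 \<noteq> {}"
      then obtain e where e: "e \<in> NCf a" "e \<in> NCf b" using a b by blast
      then have eM: "e \<in> M" unfolding NCf_def by simp
      obtain x y where xy: "x < y" "y < 2*k" "e = {x,y}" using match_edge[OF mM eM] by blast
      have "x \<in> comp M M' a" "x \<in> comp M M' b" using e xy unfolding NCf_def by auto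
      then have "NCf a = NCf b" by (rule eqN)
      then show False using N a b by simp
    qed
  qed
  have g4: "\<forall>N\<in>Pt. flippable P M N"
    unfolding Pt_def NCf_def using dccomp.flippable_NC[OF DC] by auto
  have g5: "\<forall>N1\<in>Pt. \<forall>N2\<in>Pt. N1 \<noteq> N2 \<longrightarrow> convex hull (P ` \<Union>N1) \<inter> convex hull (P ` \<Union>N2) = {}"
  proof (intro ballI impI)
    fix N1 N2 assume N: "N1 \<in> Pt" "N2 \<in> Pt" "N1 \<noteq> N2"
    obtain a where a: "a < 2*k" "N1 = NCf a" using N(1) unfolding Pt_def by auto
    obtain b where b: "b < 2*k" "N2 = NCf b" using N(2) unfolding Pt_def by auto
    have "comp M M' b \<inter> comp M M' a = {}"
    proof (rule ccontr)
      assume "comp M M' b \<inter> comp M M' a \<noteq> {}"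
      then obtain v where "v \<in> comp M M' a" "v \<in> comp M M' b" by blast
      then have "NCf a = NCf b" by (rule eqN)
      then show False using N a b by simp
    qed
    then have "convex hull (P ` comp M M' a) \<inter> convex hull (P ` comp M M' b) = {}"
      using dccomp.comp_sep[OF DC[OF a(1)] b(1)] by simp
    then show "convex hull (P ` \<Union>N1) \<inter> convex hull (P ` \<Union>N2) = {}" using UN a b by simp
  qed
  have g6: "M' = (M - \<Union>Pt) \<union> \<Union>(flip ` Pt)"
  proof -
    have fl: "flip (NCf a) = {e \<in> M'. e \<subseteq> comp M M' a}" if "a < 2*k" for a
      using dccomp.flip_NC[OF DC[OF that]] unfolding NCf_def by simp
    have "\<Union>(flip ` Pt) = M'"
    proof
      show "\<Union>(flip ` Pt) \<subseteq> M'" unfolding Pt_def using fl by auto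
      show "M' \<subseteq> \<Union>(flip ` Pt)"
      proof
        fix f assume f: "f \<in> M'"
        obtain x y where xy: "x < y" "y < 2*k" "f = {x,y}" using match_edge[OF mM' f] by blast
        have xC: "x \<in> comp M M' x" using D.self_in .
        have "y \<in> comp M M' x" using D.comp_closed[OF xC, of y] f xy by simp
        then have "f \<in> flip (NCf x)" using fl[of x] xy xC f by simp
        moreover have "NCf x \<in> Pt" unfolding Pt_def using xy by simp
        ultimately show "f \<in> \<Union>(flip ` Pt)" by blast
      qed
    qed
    then show ?thesis using g1 by simp
  qed
  have "good_partition P M M' Pt"
    unfolding good_partition_def using g1 g2 g3 g4 g5 g6 by blast
  then show ?thesis by blast
qed

theorem mainTheorem5:
  fixes P :: "nat \<Rightarrow> real^2" and k :: nat and M M' :: "nat set set"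
  assumes "k \<ge> 1"
    and "convex_clockwise P k"
    and "is_matching P k M"
    and "is_matching P k M'"
  shows "(disjoint_compatible P M M' \<longleftrightarrow> (\<exists>Pt. good_partition P M M' Pt)) \<and>
         (\<forall>Pt1 Pt2. good_partition P M M' Pt1 \<and> good_partition P M M' Pt2 \<longrightarrow> Pt1 = Pt2)"
proof
  show "disjoint_compatible P M M' \<longleftrightarrow> (\<exists>Pt. good_partition P M M' Pt)"
    using exists_partition[OF assms(2,3,4)] partition_dc[OF assms(2,3,4)] by blast
  show "\<forall>Pt1 Pt2. good_partition P M M' Pt1 \<and> good_partition P M M' Pt2 \<longrightarrow> Pt1 = Pt2"
  proof (intro allI impI)
    fix Pt1 Pt2 assume h: "good_partition P M M' Pt1 \<and> good_partition P M M' Pt2"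
    show "Pt1 = Pt2"
      using unique_partition[OF assms(3,4)] h by (meson subset_antisym)
  qed
qed


end
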